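(* Let $(\mathcal M_\rho)_{\rho>0}$, $\mathcal M_\rho:\mathcal X\to\mathcal Y$, be a family of mechanisms that can be decomposed as $\mathcal M_\rho=H\circ\mathcal A_{f,\rho}$, where $\mathcal A_{f,\rho}(x)=f(x)+Z$ is an independent additive noise mechanism for some $f:\mathcal X\to\mathbb{R}^d$, with $Z\in\mathbb{R}^d$ having i.i.d. coordinates distributed as $\mathcal D(\rho)$ for a family $(\mathcal D(\rho))_{\rho>0}$ satisfying a convolution preorder, and $H:\mathbb{R}^d\to\mathcal Y$ is an invertible function. Then $(\mathcal M_\rho)$ can be implemented with lossless multiple release.
   Context: Convolution preorder: a family $(\mathcal D(\rho))_{\rho\in\mathbb{R}_+}$ of real-valued distributions satisfies a convolution preorder if for all $\rho_1<\rho_2$ there is a distribution $\mathcal C(\rho_2,\rho_1)$ with $\mathcal D(\rho_2)*\mathcal C(\rho_2,\rho_1)=\mathcal D(\rho_1)$ ($*$ denotes convolution). Lossless multiple release: let $(\mathcal M_\rho)_{\rho>0}$ be a family of randomized mechanisms $\mathcal X\to\mathcal Y$. An implementation is a randomized stateful procedure $\textsc M$ which, given $x\in\mathcal X$, receives privacy parameters $\rho\in\mathbb{R}_+$ one at a time in arbitrary order and outputs $\textsc M(x,\rho)\in\mathcal Y$ for each. $\textsc M$ implements $(\mathcal M_\rho)$ with lossless multiple release if for every $x$: (1) for every $\rho$, $\textsc M(x,\rho)$ has the same distribution as $\mathcal M_\rho(x)$; (2) for every finite $S\subset\mathbb{R}_+$ processed in arbitrary order and every $y$, conditioned on $\textsc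 M(x,\max S)=y$, the joint distribution of $(\textsc M(x,\rho))_{\rho\in S}$ is uniquely determined by $y$ and $S$. *)

theory Defs
  imports "HOL-Probability.Probability"
begin

definition convolution_preorder :: "(real \<Rightarrow> real measure) \<Rightarrow> bool" where
  "convolution_preorder D \<longleftrightarrow>
     (\<forall>\<rho>1 \<rho>2. 0 < \<rho>1 \<longrightarrow> \<rho>1 < \<rho>2 \<longrightarrow>
        (\<exists>C. real_distribution C \<and> D \<rho>2 \<star> C = D \<rho>1))"

abbreviation Rd :: "('d::finite \<Rightarrow> real) measure" where
  "Rd \<equiv> PiM UNIV (\<lambda>_. borel)"

definition additive_noise_post :: "'y measure \<Rightarrow> (('d::finite \<Rightarrow> real) \<Rightarrow> 'y)
    \<Rightarrow> ('x \<Rightarrow> 'd \<Rightarrow> real) \<Rightarrow> real measure \<Rightarrow> 'x \<Rightarrow> 'y measure" where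
  "additive_noise_post Y H f P x = distr (PiM UNIV (\<lambda>_. P)) Y (\<lambda>z. H (\<lambda>i. f x i + z i))"

text \<open>An implementation: for input x and a finite sequence qs of distinct positive
  privacy parameters (the order in which they are submitted), Impl x qs is the joint
  law of the outputs, recorded as a function from the submitted parameters to outputs.
  Stateful/online processing: the law of the outputs for a prefix of the query
  sequence does not depend on later queries (prefix consistency).\<close>
definition valid_queries :: "real list \<Rightarrow> bool" where
  "valid_queries qs \<longleftrightarrow> distinct qs \<and> (\<forall>q\<in>set qs. 0 < q)"

definition is_implementation ::
    "'y measure \<Rightarrow> ('x \<Rightarrow> real list \<Rightarrow> (real \<Rightarrow> 'y) measure) \<Rightarrow> bool" where
  "is_implementation Y Impl \<longleftrightarrow>
     (\<forall>x qs. valid_queries qs \<longrightarrow>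
        prob_space (Impl x qs) \<and> sets (Impl x qs) = sets (PiM (set qs) (\<lambda>_. Y))) \<and>
     (\<forall>x qs q. valid_queries (qs @ [q]) \<longrightarrow>
        distr (Impl x (qs @ [q])) (PiM (set qs) (\<lambda>_. Y)) (\<lambda>\<omega>. restrict \<omega> (set qs))
          = Impl x qs)"

definition implements_lossless ::
    "'y measure \<Rightarrow> (real \<Rightarrow> 'x \<Rightarrow> 'y measure) \<Rightarrow> ('x \<Rightarrow> real list \<Rightarrow> (real \<Rightarrow> 'y) measure) \<Rightarrow> bool" where
  "implements_lossless Y M Impl \<longleftrightarrow>
     is_implementation Y Impl \<and>
     \<comment> \<open>(1) each single output has the law of the corresponding mechanism\<close>
     (\<forall>x qs \<rho>. valid_queries qs \<longrightarrow> \<rho> \<in> set qs \<longrightarrow>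
        distr (Impl x qs) Y (\<lambda>\<omega>. \<omega> \<rho>) = M \<rho> x) \<and>
     \<comment> \<open>(2) conditioned on the output at max S, the joint law is given by a kernel
          depending only on S (not on x, nor on the processing order)\<close>
     (\<forall>S. finite S \<longrightarrow> S \<noteq> {} \<longrightarrow> (\<forall>\<rho>\<in>S. 0 < \<rho>) \<longrightarrow>
        (\<exists>K. K \<in> Y \<rightarrow>\<^sub>M prob_algebra (PiM S (\<lambda>_. Y)) \<and>
           (\<forall>x qs. distinct qs \<longrightarrow> set qs = S \<longrightarrow>
              Impl x qs = distr (Impl x qs) Y (\<lambda>\<omega>. \<omega> (Max S)) \<bind> K)))"

definition lossless_multiple_release :: "'y measure \<Rightarrow> (real \<Rightarrow> 'x \<Rightarrow> 'y measure) \<Rightarrow> bool" where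
  "lossless_multiple_release Y M \<longleftrightarrow> (\<exists>Impl. implements_lossless Y M Impl)"

end

theory Submission
  imports Defs
begin

lemma rd_conv:
  assumes "real_distribution M" "real_distribution N"
  shows "real_distribution (M \<star> N)"
proof -
  interpret M: real_distribution M by fact
  interpret N: real_distribution N by fact
  interpret P: pair_prob_space M N ..
  show ?thesis
    unfolding convolution_def real_distribution_def real_distribution_axioms_def
    by (auto intro!: P.prob_space_distr)
qed

lemma char_conv:
  assumes "real_distribution M" "real_distribution N"
  shows "char (M \<star> N) t = char M t * char N t"
proof -
  interpret M: real_distribution M by fact
  interpret N: real_distribution N by fact
  interpret P: pair_prob_space M N ..
  have sM[measurable_cong]: "sets M = sets borel" and sN[measurable_cong]: "sets N = sets borel" by auto
  have dfst: "distr (M \<Otimes>\<^sub>M N) borel fst = M"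
  proof -
    have "distr (M \<Otimes>\<^sub>M N) borel fst = distr (M \<Otimes>\<^sub>M N) M fst"
      by (rule distr_cong) auto
    also have "\<dots> = M" by (rule N.distr_pair_fst)
    finally show ?thesis .
  qed
  have dsnd: "distr (M \<Otimes>\<^sub>M N) borel snd = N"
  proof -
    have "distr (M \<Otimes>\<^sub>M N) borel snd = distr (M \<Otimes>\<^sub>M N) N snd"
      by (rule distr_cong) auto
    also have "\<dots> = N"
    proof (intro measure_eqI)
      fix A assume A: "A \<in> sets (distr (M \<Otimes>\<^sub>M N) N snd)"
      from A have "emeasure (distr (M \<Otimes>\<^sub>M N) N snd) A = emeasure (M \<Otimes>\<^sub>M N) (space M \<times> A)"
        by (auto simp add: emeasure_distr space_pair_measure dest: sets.sets_into_space intro!: arg_cong2[where f=emeasure])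
      with A show "emeasure (distr (M \<Otimes>\<^sub>M N) N snd) A = emeasure N A"
        using N.emeasure_pair_measure_Times[OF sets.top[of M], of A] M.emeasure_space_1 by simp
    qed simp
    finally show ?thesis .
  qed
  have ind: "P.indep_var borel fst borel snd"
  proof (subst P.indep_var_distribution_eq, intro conjI)
    show "fst \<in> (M \<Otimes>\<^sub>M N) \<rightarrow>\<^sub>M borel" using measurable_fst[of M N] unfolding measurable_cong_sets[OF refl sM, of "M \<Otimes>\<^sub>M N"] .
    show "snd \<in> (M \<Otimes>\<^sub>M N) \<rightarrow>\<^sub>M borel" using measurable_snd[of M N] unfolding measurable_cong_sets[OF refl sN, of "M \<Otimes>\<^sub>M N"] .
    show "distr (M \<Otimes>\<^sub>M N) borel fst \<Otimes>\<^sub>M distr (M \<Otimes>\<^sub>M N) borel snd =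
      distr (M \<Otimes>\<^sub>M N) (borel \<Otimes>\<^sub>M borel) (\<lambda>x. (fst x, snd x))"
      unfolding dfst dsnd
      by (rule measure_eqI) (auto simp: emeasure_distr sets_pair_measure_cong[OF sM sN] intro!: arg_cong2[where f=emeasure])
  qed
  have "char (M \<star> N) t = char (distr (M \<Otimes>\<^sub>M N) borel (\<lambda>\<omega>. fst \<omega> + snd \<omega>)) t"
    unfolding convolution_def by (simp add: case_prod_beta')
  also have "\<dots> = char (distr (M \<Otimes>\<^sub>M N) borel fst) t * char (distr (M \<Otimes>\<^sub>M N) borel snd) t"
    by (rule P.char_distr_add[OF ind])
  finally show ?thesis unfolding dfst dsnd .
qed

lemma conv_tail:
  fixes K :: real
  assumes A: "real_distribution A" and C: "real_distribution C"
  shows "measure C (- {-(2*K)<..2*K}) * measure A {-K<..K} \<le> measure (A \<star> C) (- {-K<..K})"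
proof -
  interpret A: real_distribution A by fact
  interpret C: real_distribution C by fact
  have rAC: "real_distribution (A \<star> C)" by (rule rd_conv[OF A C])
  interpret AC: real_distribution "A \<star> C" by fact
  let ?E = "- {-K<..K}" and ?E2 = "- {-(2*K)<..2*K}" and ?I = "{-K<..K}"
  have meas: "{a. a + x \<in> ?E} \<in> sets C" for x
  proof -
    have "(\<lambda>a. a + x) \<in> borel_measurable borel" by simp
    hence "(\<lambda>a. a + x) -` ?E \<inter> space borel \<in> sets borel" by (rule measurable_sets) simp
    thus ?thesis by (simp add: vimage_def)
  qed
  have "emeasure C ?E2 * emeasure A ?I = (\<integral>\<^sup>+x. emeasure C ?E2 * indicator ?I x \<partial>A)"
    by (subst nn_integral_cmult_indicator) auto
  also have "\<dots> \<le> (\<integral>\<^sup>+x. emeasure C {a. a + x \<in> ?E} \<partial>A)"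
  proof (rule nn_integral_mono)
    fix x show "emeasure C ?E2 * indicator ?I x \<le> emeasure C {a. a + x \<in> ?E}"
    proof (cases "x \<in> ?I")
      case True
      have "?E2 \<subseteq> {a. a + x \<in> ?E}" using True by auto
      hence "emeasure C ?E2 \<le> emeasure C {a. a + x \<in> ?E}"
        by (intro emeasure_mono meas)
      thus ?thesis using True by simp
    qed simp
  qed
  also have "\<dots> = emeasure (A \<star> C) ?E"
    by (subst convolution_emeasure) auto
  finally have "emeasure C ?E2 * emeasure A ?I \<le> emeasure (A \<star> C) ?E" .
  thus ?thesis
    by (simp add: A.emeasure_eq_measure C.emeasure_eq_measure AC.emeasure_eq_measure ennreal_mult''[symmetric])
qed

lemma V_tight:
  assumes A: "real_distribution A" and B: "real_distribution B" and e: "(e::real) > 0"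
  shows "\<exists>K>0. \<forall>C. real_distribution C \<and> A \<star> C = B \<longrightarrow> measure C {-(2*K)<..2*K} > 1 - e"
proof -
  interpret A: real_distribution A by fact
  interpret B: real_distribution B by fact
  let ?I = "\<lambda>n::nat. {-real n<..real n}"
  have inc: "incseq ?I" by (auto simp: incseq_def)
  have un: "(\<Union>n. ?I n) = UNIV"
  proof safe
    fix x :: real
    obtain n :: nat where "\<bar>x\<bar> < real n" using reals_Archimedean2 by blast
    hence "x \<in> ?I n" by auto
    thus "x \<in> (\<Union>n. ?I n)" by blast
  qed simp
  have lA: "(\<lambda>n. measure A (?I n)) \<longlonglongrightarrow> 1"
    using A.finite_Lim_measure_incseq[OF _ inc] un A.prob_space by (auto simp: image_subset_iff)
  have lB: "(\<lambda>n. measure B (?I n)) \<longlonglongrightarrow> 1"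
    using B.finite_Lim_measure_incseq[OF _ inc] un B.prob_space by (auto simp: image_subset_iff)
  have "eventually (\<lambda>n. measure A (?I n) > 1/2) sequentially"
    using order_tendstoD(1)[OF lA, of "1/2"] by simp
  moreover have "eventually (\<lambda>n. measure B (?I n) > 1 - e/2) sequentially"
    using order_tendstoD(1)[OF lB, of "1 - e/2"] e by simp
  moreover have "eventually (\<lambda>n. n \<ge> 1) sequentially" by (simp add: eventually_ge_at_top)
  ultimately have "eventually (\<lambda>n. measure A (?I n) > 1/2 \<and> measure B (?I n) > 1 - e/2 \<and> n \<ge> 1) sequentially"
    by eventually_elim auto
  then obtain n where nA: "measure A (?I n) > 1/2" and nB: "measure B (?I n) > 1 - e/2" and n1: "n \<ge> 1"
    by (auto simp: eventually_sequentially)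
  define K where "K = real n"
  have K: "K > 0" using n1 by (simp add: K_def)
  show ?thesis
  proof (intro exI[of _ K] conjI K allI impI)
    fix C assume HC: "real_distribution C \<and> A \<star> C = B"
    interpret C: real_distribution C using HC by simp
    have t: "measure C (- {-(2*K)<..2*K}) * measure A {-K<..K} \<le> measure B (- {-K<..K})"
      using conv_tail[OF A, of C K] HC by simp
    have "measure B (- {-K<..K}) = 1 - measure B {-K<..K}"
      using B.prob_compl[of "{-K<..K}"] by (simp add: Compl_eq_Diff_UNIV)
    also have "\<dots> < e/2" using nB by (simp add: K_def)
    finally have "measure C (- {-(2*K)<..2*K}) * measure A {-K<..K} < e/2" using t by linarith
    moreover have "measure A {-K<..K} > 1/2" using nA by (simp add: K_def)
    ultimately have "measure C (- {-(2*K)<..2*K}) * (1/2) < e/2"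
      by (smt (verit, best) measure_nonneg mult_left_mono)
    hence "measure C (- {-(2*K)<..2*K}) < e" by simp
    moreover have "measure C (- {-(2*K)<..2*K}) = 1 - measure C {-(2*K)<..2*K}"
      using C.prob_compl[of "{-(2*K)<..2*K}"] by (simp add: Compl_eq_Diff_UNIV)
    ultimately show "measure C {-(2*K)<..2*K} > 1 - e" by simp
  qed
qed

lemma conv_assoc_rd:
  assumes "real_distribution L" "real_distribution M" "real_distribution N"
  shows "(L \<star> (M \<star> N)) = ((L \<star> M) \<star> N)"
proof -
  interpret L: real_distribution L by fact
  interpret M: real_distribution M by fact
  interpret N: real_distribution N by fact
  show ?thesis by (rule convolution_associative) (simp_all add: L.finite_measure_axioms M.finite_measure_axioms N.finite_measure_axioms)
qed

lemma conv_comm_rd: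
  assumes "real_distribution M" "real_distribution N"
  shows "(M \<star> N) = (N \<star> M)"
proof -
  interpret M: real_distribution M by fact
  interpret N: real_distribution N by fact
  show ?thesis by (rule convolution_commutative) (simp_all add: M.finite_measure_axioms N.finite_measure_axioms)
qed

definition Vg :: "(real \<Rightarrow> real measure) \<Rightarrow> real \<Rightarrow> real \<Rightarrow> real measure \<Rightarrow> bool" where
  "Vg D b a C \<longleftrightarrow> real_distribution C \<and> (D b \<star> C) = D a"

lemma fin_sg_pos:
  assumes Dd: "\<And>\<rho>. 0 < \<rho> \<Longrightarrow> real_distribution (D \<rho>)" and Dp: "convolution_preorder D"
    and fin: "finite P" and pos: "P \<subseteq> {0<..}"
  shows "\<exists>C. (\<forall>a b. 0 < a \<longrightarrow> a < b \<longrightarrow> Vg D b a (C b a)) \<and>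
     (\<forall>a\<in>P. \<forall>b\<in>P. \<forall>c\<in>P. a < b \<longrightarrow> b < c \<longrightarrow> C c a = (C c b \<star> C b a))"
  using fin pos
proof (induction "card P" arbitrary: P rule: less_induct)
  case less
  have ex: "\<exists>C. Vg D b a C" if "0 < a" "a < b" for a b
    using Dp that unfolding convolution_preorder_def Vg_def by blast
  show ?case
  proof (cases "P = {}")
    case True
    show ?thesis
      by (rule exI[of _ "\<lambda>b a. SOME C. Vg D b a C"]) (auto simp: True intro: someI_ex[OF ex])
  next
    case False
    define m where "m = Min P"
    have mP: "m \<in> P" using False less.prems by (simp add: m_def)
    have mle: "\<And>x. x \<in> P \<Longrightarrow> m \<le> x" using less.prems by (simp add: m_def)
    have m0: "0 < m" using mP less.prems by auto
    define P' where "P' = P - {m}"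
    have "card P' < card P" unfolding P'_def using mP less.prems(1) by (metis card_Diff1_less)
    moreover have "finite P'" "P' \<subseteq> {0<..}" using less.prems by (auto simp: P'_def)
    ultimately obtain C' where C'V0: "\<forall>a b. 0 < a \<longrightarrow> a < b \<longrightarrow> Vg D b a (C' b a)"
      and C'S0: "\<forall>a\<in>P'. \<forall>b\<in>P'. \<forall>c\<in>P'. a < b \<longrightarrow> b < c \<longrightarrow> C' c a = (C' c b \<star> C' b a)"
      using less.hyps by metis
    have C'V: "\<And>a b. 0 < a \<Longrightarrow> a < b \<Longrightarrow> Vg D b a (C' b a)" using C'V0 by blast
    have C'S: "\<And>a b c. a\<in>P' \<Longrightarrow> b\<in>P' \<Longrightarrow> c\<in>P' \<Longrightarrow> a < b \<Longrightarrow> b < c \<Longrightarrow> C' c a = (C' c b \<star> C' b a)"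
      using C'S0 by blast
    show ?thesis
    proof (cases "P' = {}")
      case True
      hence "P = {m}" using mP by (auto simp: P'_def)
      show ?thesis
      proof (intro exI[of _ C'] conjI)
        show "\<forall>a b. 0 < a \<longrightarrow> a < b \<longrightarrow> Vg D b a (C' b a)" using C'V by blast
        show "\<forall>a\<in>P. \<forall>b\<in>P. \<forall>c\<in>P. a < b \<longrightarrow> b < c \<longrightarrow> C' c a = (C' c b \<star> C' b a)"
          using \<open>P = {m}\<close> by simp
      qed
    next
      case False
      define m' where "m' = Min P'"
      have m'P: "m' \<in> P'" using False \<open>finite P'\<close> by (simp add: m'_def)
      have m'le: "\<And>x. x \<in> P' \<Longrightarrow> m' \<le> x" using \<open>finite P'\<close> by (simp add: m'_def)
      have "m' \<in> P" "m' \<noteq> m" using m'P by (auto simp: P'_def)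
      hence mm': "m < m'" using mle[of m'] by simp
      have P'eq: "\<And>x. x \<in> P \<Longrightarrow> x \<noteq> m \<Longrightarrow> x \<in> P'" by (simp add: P'_def)
      obtain E where E: "Vg D m' m E" using ex[OF m0 mm'] by blast
      define C where "C b a = (if a = m \<and> b \<in> P' \<and> m' < b then C' b m' \<star> E
         else if a = m \<and> b = m' then E else C' b a)" for b a
      have Erd: "real_distribution E" using E by (simp add: Vg_def)
      have rdC': "real_distribution (C' b a)" if "0 < a" "a < b" for a b
        using C'V[OF that] by (simp add: Vg_def)
      have CV: "Vg D b a (C b a)" if ab: "0 < a" "a < b" for a b
      proof (cases "a = m \<and> b \<in> P' \<and> m' < b")
        case True
        have rd1: "real_distribution (C' b m')" using rdC'[of m' b] mm' m0 True by simp
        have "(D b \<star> (C' b m' \<star> E)) = ((D b \<star> C' b m') \<star> E)"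
          by (rule conv_assoc_rd[OF Dd rd1 Erd]) (use ab in simp)
        also have "(D b \<star> C' b m') = D m'" using C'V[of m' b] mm' m0 True by (simp add: Vg_def)
        also have "(D m' \<star> E) = D m" using E by (simp add: Vg_def)
        finally show ?thesis using True rd_conv[OF rd1 Erd] by (simp add: C_def Vg_def)
      next
        case F1: False
        show ?thesis
        proof (cases "a = m \<and> b = m'")
          case True
          hence "C b a = E" using F1 by (simp add: C_def)
          thus ?thesis using E True by simp
        next
          case False
          hence "C b a = C' b a" using F1 by (auto simp: C_def)
          thus ?thesis using C'V[OF ab] by simp
        qed
      qed
      have CS: "C c a = (C c b \<star> C b a)" if H: "a\<in>P" "b\<in>P" "c\<in>P" "a < b" "b < c" for a b c
      proof (cases "a = m")
        case False
        have am: "m \<le> a" using mle H(1) .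
        have "a \<noteq> m" "b \<noteq> m" "c \<noteq> m" using H(4,5) False am by auto
        moreover have "a \<in> P'" "b \<in> P'" "c \<in> P'" using H(1-3) calculation by (auto simp: P'_def)
        ultimately show ?thesis using C'S[of a b c] H by (simp add: C_def)
      next
        case True
        have bP': "b \<in> P'" "c \<in> P'" using H True by (auto simp: P'_def)
        have bm: "b \<noteq> m" "c \<noteq> m" using H True by auto
        have cm': "m' < c" using m'le[OF bP'(1)] H by simp
        show ?thesis
        proof (cases "b = m'")
          case True
          thus ?thesis using \<open>a = m\<close> bP' bm cm' by (simp add: C_def)
        next
          case False
          hence bm': "m' < b" using m'le[OF bP'(1)] by simp
          have rd1: "real_distribution (C' c b)" using rdC'[of b c] H m0 mle[of b] \<open>a = m\<close> by simp
          have rd2: "real_distribution (C' b m')" using rdC'[of m' b] bm' mm' m0 by simp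
          have "(C c b \<star> C b a) = (C' c b \<star> (C' b m' \<star> E))"
            using \<open>a = m\<close> bP' bm bm' by (simp add: C_def)
          also have "\<dots> = ((C' c b \<star> C' b m') \<star> E)" by (rule conv_assoc_rd[OF rd1 rd2 Erd])
          also have "(C' c b \<star> C' b m') = C' c m'" using C'S[OF m'P bP' bm' ] H by simp
          finally show ?thesis using \<open>a = m\<close> bP' cm' by (simp add: C_def)
        qed
      qed
      show ?thesis
        by (rule exI[of _ C], intro conjI allI impI ballI CV CS) assumption+
    qed
  qed
qed

lemma fin_sg:
  assumes Dd: "\<And>\<rho>. 0 < \<rho> \<Longrightarrow> real_distribution (D \<rho>)" and Dp: "convolution_preorder D"
    and fin: "finite L"
  shows "\<exists>C. (\<forall>a b. 0 < a \<longrightarrow> a < b \<longrightarrow> Vg D b a (C b a)) \<and>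
     (\<forall>a\<in>L. \<forall>b\<in>L. \<forall>c\<in>L. 0 < a \<longrightarrow> a < b \<longrightarrow> b < c \<longrightarrow> C c a = (C c b \<star> C b a))"
proof -
  obtain C where "\<forall>a b. 0 < a \<longrightarrow> a < b \<longrightarrow> Vg D b a (C b a)"
    "\<forall>a\<in>L \<inter> {0<..}. \<forall>b\<in>L \<inter> {0<..}. \<forall>c\<in>L \<inter> {0<..}. a < b \<longrightarrow> b < c \<longrightarrow> C c a = (C c b \<star> C b a)"
    using fin_sg_pos[OF Dd Dp, of "L \<inter> {0<..}"] fin by auto
  thus ?thesis by (intro exI[of _ C]) auto
qed

lemma char_eq_on_rats:
  assumes M1: "real_distribution M1" and M2: "real_distribution M2"
    and eq: "\<And>r. r \<in> \<rat> \<Longrightarrow> char M1 r = char M2 r"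
  shows "M1 = M2"
proof -
  interpret M1: real_distribution M1 by fact
  interpret M2: real_distribution M2 by fact
  have c1: "continuous_on UNIV (char M1)"
    by (intro continuous_at_imp_continuous_on ballI M1.isCont_char)
  have c2: "continuous_on UNIV (char M2)"
    by (intro continuous_at_imp_continuous_on ballI M2.isCont_char)
  have cl: "closed {t. char M1 t = char M2 t}"
    using closed_Collect_eq[OF c1 c2] by simp
  have "\<rat> \<subseteq> {t. char M1 t = char M2 t}" using eq by auto
  hence "closure \<rat> \<subseteq> {t. char M1 t = char M2 t}" using cl by (rule closure_minimal)
  hence "char M1 = char M2" unfolding Rats_closure_real by auto
  thus ?thesis by (rule Levy_uniqueness[OF M1 M2])
qed

lemma rd_return0: "real_distribution (return borel (0::real))"
  unfolding real_distribution_def real_distribution_axioms_def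
  by (auto intro!: prob_space_return)

lemma sg_exists:
  fixes D :: "real \<Rightarrow> real measure"
  assumes Dd: "\<And>\<rho>. 0 < \<rho> \<Longrightarrow> real_distribution (D \<rho>)" and Dp: "convolution_preorder D"
  shows "\<exists>C. (\<forall>a b. real_distribution (C b a)) \<and>
     (\<forall>a b. 0 < a \<longrightarrow> a < b \<longrightarrow> (D b \<star> C b a) = D a) \<and>
     (\<forall>a b c. 0 < a \<longrightarrow> a < b \<longrightarrow> b < c \<longrightarrow> C c a = (C c b \<star> C b a))"
proof -
  define good where "good L C \<longleftrightarrow> (\<forall>a b. 0 < a \<longrightarrow> a < b \<longrightarrow> Vg D b a (C b a)) \<and>
     (\<forall>a\<in>L. \<forall>b\<in>L. \<forall>c\<in>L. 0 < a \<longrightarrow> a < b \<longrightarrow> b < c \<longrightarrow> C c a = (C c b \<star> C b a))"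
    for L :: "real set" and C :: "real \<Rightarrow> real \<Rightarrow> real measure"
  define CL where "CL L = (SOME C. good L C)" for L
  have goodCL: "good L (CL L)" if "finite L" for L
  proof -
    have "\<exists>C. good L C" using fin_sg[OF Dd Dp that] unfolding good_def by blast
    thus ?thesis unfolding CL_def by (rule someI_ex)
  qed
  have CLV: "real_distribution (CL L b a)" "(D b \<star> CL L b a) = D a"
    if "finite L" "0 < a" "a < b" for L a b
    using goodCL[OF that(1)] that by (auto simp: good_def Vg_def)
  have CLS: "CL L c a = (CL L c b \<star> CL L b a)"
    if "finite L" "0 < a" "a < b" "b < c" "a \<in> L" "b \<in> L" "c \<in> L" for L a b c
    using goodCL[OF that(1)] that by (auto simp: good_def)
  define \<Phi> where "\<Phi> L = (\<lambda>(b,a,t). if 0 < a \<and> a < b then char (CL L b a) t else 0)" for L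
  define X where "X = (Pi\<^sub>E UNIV (\<lambda>_. cball (0::complex) 1) :: (real \<times> real \<times> real \<Rightarrow> complex) set)"
  have cX: "compact X"
  proof -
    have "compactin (product_topology (\<lambda>_. euclidean) UNIV) (Pi\<^sub>E (UNIV :: (real \<times> real \<times> real) set) (\<lambda>_. cball (0::complex) 1))"
      by (subst compactin_PiE) simp
    thus ?thesis unfolding X_def euclidean_product_topology compactin_euclidean_iff .
  qed
  have \<Phi>X: "\<Phi> L \<in> X" if "finite L" for L
  proof -
    have "\<Phi> L (b,a,t) \<in> cball 0 1" for b a t
    proof (cases "0 < a \<and> a < b")
      case True
      interpret R: real_distribution "CL L b a" using CLV[OF that] True by simp
      show ?thesis using True R.cmod_char_le_1 by (simp add: \<Phi>_def)
    qed (auto simp: \<Phi>_def)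
    hence "\<Phi> L k \<in> cball 0 1" for k by (cases k) auto
    thus ?thesis unfolding X_def by (simp add: PiE_UNIV_domain Pi_iff)
  qed
  define T where "T F = closure {\<Phi> L | L. finite L \<and> F \<subseteq> L}" for F
  have "X \<inter> (\<Inter>F\<in>{F. finite F}. T F) \<noteq> {}"
  proof (rule compact_imp_fip_image[OF cX])
    show "closed (T F)" for F unfolding T_def by simp
    fix I' :: "real set set" assume I': "finite I'" "I' \<subseteq> {F. finite F}"
    have fin: "finite (\<Union>I')" using I' by auto
    have "\<Phi> (\<Union>I') \<in> X" by (rule \<Phi>X[OF fin])
    moreover have "\<Phi> (\<Union>I') \<in> T F" if "F \<in> I'" for F
      unfolding T_def using that fin by (intro subsetD[OF closure_subset]) auto
    ultimately show "X \<inter> (\<Inter>F\<in>I'. T F) \<noteq> {}" by blast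
  qed
  then obtain \<psi> where \<psi>X: "\<psi> \<in> X" and \<psi>T: "\<And>F. finite F \<Longrightarrow> \<psi> \<in> T F" by blast
  have clos: "P \<psi>" if F: "finite F" and cl: "closed {\<phi>. P \<phi>}"
    and H: "\<And>L. finite L \<Longrightarrow> F \<subseteq> L \<Longrightarrow> P (\<Phi> L)" for F P
  proof -
    have "T F \<subseteq> {\<phi>. P \<phi>}" unfolding T_def using H by (intro closure_minimal cl) auto
    thus ?thesis using \<psi>T[OF F] by auto
  qed
  have cont_ev: "continuous_on UNIV (\<lambda>\<phi>::real \<times> real \<times> real \<Rightarrow> complex. \<phi> k)" for k
    by simp
  have P1: "\<psi> (c,a,t) = \<psi> (c,b,t) * \<psi> (b,a,t)" if "0 < a" "a < b" "b < c" for a b c t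
  proof (rule clos[of "{a,b,c}"], simp)
    show "closed {\<phi>::real \<times> real \<times> real \<Rightarrow> complex. \<phi> (c,a,t) = \<phi> (c,b,t) * \<phi> (b,a,t)}"
      by (rule closed_Collect_eq, rule cont_ev, rule continuous_on_mult, (rule cont_ev)+)
    fix L :: "real set" assume L: "finite L" "{a,b,c} \<subseteq> L"
    have "char (CL L c a) t = char (CL L c b \<star> CL L b a) t"
      using CLS[OF L(1) that] L by simp
    also have "\<dots> = char (CL L c b) t * char (CL L b a) t"
      by (rule char_conv) (use CLV[OF L(1)] that in auto)
    finally show "\<Phi> L (c,a,t) = \<Phi> L (c,b,t) * \<Phi> L (b,a,t)" using that by (simp add: \<Phi>_def)
  qed
  have P2: "char (D b) t * \<psi> (b,a,t) = char (D a) t" if "0 < a" "a < b" for a b t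
  proof (rule clos[of "{}"], simp)
    show "closed {\<phi>::real \<times> real \<times> real \<Rightarrow> complex. char (D b) t * \<phi> (b,a,t) = char (D a) t}"
      by (rule closed_Collect_eq, rule continuous_on_mult, rule continuous_on_const, rule cont_ev, rule continuous_on_const)
    fix L :: "real set" assume L: "finite L" "{} \<subseteq> L"
    have "char (D b) t * char (CL L b a) t = char (D b \<star> CL L b a) t"
      by (rule char_conv[symmetric]) (use CLV[OF L(1) that] Dd that in auto)
    also have "\<dots> = char (D a) t" using CLV[OF L(1) that] by simp
    finally show "char (D b) t * \<Phi> L (b,a,t) = char (D a) t" using that by (simp add: \<Phi>_def)
  qed
  define qe where "qe k = (of_rat (from_nat k) :: real)" for k :: nat
  have P3: "\<exists>\<mu>. real_distribution \<mu> \<and> (D b \<star> \<mu>) = D a \<and> (\<forall>r\<in>\<rat>. char \<mu> r = \<psi> (b,a,r))"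
    if ab: "0 < a" "a < b" for a b
  proof -
    have "\<exists>L. finite L \<and> {a,b} \<subseteq> L \<and> (\<forall>k\<in>{..n}. \<Phi> L (b,a,qe k) \<in> ball (\<psi> (b,a,qe k)) (1 / Suc n))" for n
    proof -
      let ?O = "{f. \<forall>k\<in>{..n}. f ((\<lambda>k. (b,a,qe k)) k) \<in> (\<lambda>k. ball (\<psi> (b,a,qe k)) (1 / Suc n)) k}"
      have oO: "open ?O" by (rule product_topology_basis') auto
      have "\<psi> \<in> ?O" by auto
      hence "{\<Phi> L | L. finite L \<and> {a,b} \<subseteq> L} \<inter> ?O \<noteq> {}"
        using \<psi>T[of "{a,b}"] oO unfolding T_def closure_iff_nhds_not_empty by blast
      thus ?thesis by auto
    qed
    then obtain Ls where Ls: "\<And>n. finite (Ls n)" "\<And>n. {a,b} \<subseteq> Ls n"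
      "\<And>n k. k \<le> n \<Longrightarrow> \<Phi> (Ls n) (b,a,qe k) \<in> ball (\<psi> (b,a,qe k)) (1 / Suc n)"
      by (metis atMost_iff)
    define \<mu>s where "\<mu>s n = CL (Ls n) b a" for n
    have \<mu>rd: "real_distribution (\<mu>s n)" and \<mu>conv: "(D b \<star> \<mu>s n) = D a" for n
      using CLV[OF Ls(1) ab] by (auto simp: \<mu>s_def)
    have lim: "(\<lambda>n. char (\<mu>s n) (qe k)) \<longlonglongrightarrow> \<psi> (b,a,qe k)" for k
    proof (rule LIMSEQ_I)
      fix r :: real assume r: "0 < r"
      obtain N :: nat where N: "1 / Suc N < r"
        using reals_Archimedean[OF r] by (auto simp: inverse_eq_divide)
      show "\<exists>no. \<forall>n\<ge>no. norm (char (\<mu>s n) (qe k) - \<psi> (b,a,qe k)) < r"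
      proof (intro exI[of _ "max k N"] allI impI)
        fix n assume n: "max k N \<le> n"
        have "dist (\<psi> (b,a,qe k)) (\<Phi> (Ls n) (b,a,qe k)) < 1 / Suc n"
          using Ls(3)[of k n] n by simp
        hence "norm (char (\<mu>s n) (qe k) - \<psi> (b,a,qe k)) < 1 / Suc n"
          using ab by (simp add: \<Phi>_def \<mu>s_def dist_norm norm_minus_commute)
        also have "1 / Suc n \<le> 1 / Suc N" using n by (simp add: frac_le)
        finally show "norm (char (\<mu>s n) (qe k) - \<psi> (b,a,qe k)) < r" using N by linarith
      qed
    qed
    have tight: "tight \<mu>s"
      unfolding tight_def
    proof (intro conjI allI impI \<mu>rd)
      fix e :: real assume e: "0 < e"
      obtain K where "K > 0" and K: "\<And>C. real_distribution C \<and> (D b \<star> C) = D a \<Longrightarrow> measure C {-(2*K)<..2*K} > 1 - e"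
        using V_tight[OF Dd Dd e, of b a] ab by auto
      show "\<exists>a' b'. a' < b' \<and> (\<forall>n. 1 - e < measure (\<mu>s n) {a'<..b'})"
        using K \<mu>rd \<mu>conv \<open>K > 0\<close> by (intro exI[of _ "-(2*K)"] exI[of _ "2*K"]) auto
    qed
    obtain rr M where rr: "strict_mono rr" and M: "real_distribution M" and wc: "weak_conv_m (\<mu>s \<circ> id \<circ> rr) M"
      using tight_imp_convergent_subsubsequence[OF tight, of id] by (auto simp: strict_mono_def)
    have Mq: "char M (qe k) = \<psi> (b,a,qe k)" for k
    proof -
      have "(\<lambda>n. char ((\<mu>s \<circ> id \<circ> rr) n) (qe k)) \<longlonglongrightarrow> char M (qe k)"
        by (rule levy_continuity1[OF _ M wc]) (simp add: \<mu>rd)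
      moreover have "((\<lambda>n. char (\<mu>s n) (qe k)) \<circ> rr) \<longlonglongrightarrow> \<psi> (b,a,qe k)"
        by (rule LIMSEQ_subseq_LIMSEQ[OF lim rr])
      ultimately show ?thesis by (simp add: comp_def LIMSEQ_unique)
    qed
    have Mr: "char M r = \<psi> (b,a,r)" if "r \<in> \<rat>" for r
    proof -
      from that obtain q where q: "r = of_rat q" by (cases rule: Rats_cases) auto
      have "qe (to_nat q) = r" by (simp add: qe_def q)
      thus ?thesis using Mq[of "to_nat q"] by simp
    qed
    have "(D b \<star> M) = D a"
    proof (rule char_eq_on_rats[OF rd_conv[OF Dd M] Dd])
      fix r :: real assume r: "r \<in> \<rat>"
      have "char (D b \<star> M) r = char (D b) r * char M r" by (rule char_conv[OF Dd M]) (use ab in simp)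
      also have "\<dots> = char (D a) r" using Mr[OF r] P2[OF ab] by simp
      finally show "char (D b \<star> M) r = char (D a) r" .
    qed (use ab in auto)
    thus ?thesis using M Mr by blast
  qed
  define C where "C b a = (if 0 < a \<and> a < b then SOME \<mu>. real_distribution \<mu> \<and> (D b \<star> \<mu>) = D a \<and> (\<forall>r\<in>\<rat>. char \<mu> r = \<psi> (b,a,r))
     else return borel 0)" for b a
  have C1: "real_distribution (C b a) \<and> (D b \<star> C b a) = D a \<and> (\<forall>r\<in>\<rat>. char (C b a) r = \<psi> (b,a,r))"
    if "0 < a" "a < b" for a b
    unfolding C_def using someI_ex[OF P3[OF that]] that by simp
  have Crd: "real_distribution (C b a)" for a b
    using C1[of a b] rd_return0 by (cases "0 < a \<and> a < b") (auto simp: C_def)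
  show ?thesis
  proof (intro exI[of _ C] conjI allI impI Crd)
    fix a b :: real assume "0 < a" "a < b" thus "(D b \<star> C b a) = D a" using C1 by blast
  next
    fix a b c :: real assume H: "0 < a" "a < b" "b < c"
    show "C c a = (C c b \<star> C b a)"
    proof (rule char_eq_on_rats[OF Crd rd_conv[OF Crd Crd]])
      fix r :: real assume r: "r \<in> \<rat>"
      have "char (C c a) r = \<psi> (c,a,r)" using C1[of a c] H r by auto
      also have "\<dots> = \<psi> (c,b,r) * \<psi> (b,a,r)" by (rule P1[OF H])
      also have "\<dots> = char (C c b) r * char (C b a) r" using C1[of b c] C1[of a b] H r by auto
      also have "\<dots> = char (C c b \<star> C b a) r" by (rule char_conv[symmetric, OF Crd Crd])
      finally show "char (C c a) r = char (C c b \<star> C b a) r" .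
    qed
  qed
qed

lemma PiM_coord_indep:
  fixes G :: "'k \<Rightarrow> real measure"
  assumes I: "finite I" "I \<noteq> {}" and G: "\<And>k. real_distribution (G k)"
  shows "prob_space.indep_vars (PiM I G) (\<lambda>_. borel) (\<lambda>k \<omega>. \<omega> k) I"
proof -
  interpret P: prob_space "PiM I G" by (rule prob_space_PiM) (use G in \<open>simp add: real_distribution_def\<close>)
  have sG: "sets (G k) = sets borel" for k using G[of k] by (simp add: real_distribution_def real_distribution_axioms_def)
  have sP: "sets (PiM I G) = sets (PiM I (\<lambda>_. borel))" by (rule sets_PiM_cong) (auto simp: sG)
  have rv: "(\<lambda>\<omega>. \<omega> k) \<in> PiM I G \<rightarrow>\<^sub>M borel" if "k \<in> I" for k
    using measurable_component_singleton[OF that, of G] measurable_cong_sets[OF refl sG[of k], of "PiM I G"] by simp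
  have comp: "distr (PiM I G) borel (\<lambda>\<omega>. \<omega> k) = G k" if "k \<in> I" for k
  proof -
    have "distr (PiM I G) borel (\<lambda>\<omega>. \<omega> k) = distr (PiM I G) (G k) (\<lambda>\<omega>. \<omega> k)"
      by (rule distr_cong) (auto simp: sG)
    also have "\<dots> = G k" by (rule distr_PiM_component) (use G that in \<open>auto simp: real_distribution_def\<close>)
    finally show ?thesis .
  qed
  have "distr (PiM I G) (PiM I (\<lambda>_. borel)) (\<lambda>x. \<lambda>k\<in>I. x k) = distr (PiM I G) (PiM I G) (\<lambda>x. x)"
    by (rule distr_cong) (auto simp: sP space_PiM PiE_def extensional_restrict)
  also have "\<dots> = PiM I G" by (rule distr_id2) simp
  also have "\<dots> = PiM I (\<lambda>k. distr (PiM I G) borel (\<lambda>\<omega>. \<omega> k))"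
    by (rule PiM_cong) (auto simp: comp)
  finally show ?thesis
    by (subst P.indep_vars_iff_distr_eq_PiM'[OF I(2) rv]) auto
qed

lemma merge_blocks:
  fixes G :: "'k \<Rightarrow> real measure" and Bl :: "'j \<Rightarrow> 'k set"
  assumes I: "finite I" "I \<noteq> {}" and G: "\<And>k. real_distribution (G k)"
    and J: "J \<noteq> {}" and BlI: "\<And>j. j \<in> J \<Longrightarrow> Bl j \<subseteq> I" and dis: "disjoint_family_on Bl J"
  shows "distr (PiM I G) (PiM J (\<lambda>_. borel)) (\<lambda>\<omega>. \<lambda>j\<in>J. \<Sum>k\<in>Bl j. \<omega> k) =
         PiM J (\<lambda>j. distr (PiM I G) borel (\<lambda>\<omega>. \<Sum>k\<in>Bl j. \<omega> k))"
proof -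
  interpret P: prob_space "PiM I G" by (rule prob_space_PiM) (use G in \<open>simp add: real_distribution_def\<close>)
  have ind: "P.indep_vars (\<lambda>_. borel) (\<lambda>k \<omega>. \<omega> k) I" by (rule PiM_coord_indep[OF I G])
  have ind2: "P.indep_vars (\<lambda>j. PiM (Bl j) (\<lambda>_. borel)) (\<lambda>j \<omega>. restrict (\<lambda>k. \<omega> k) (Bl j)) J"
    by (rule P.indep_vars_restrict[OF ind BlI dis])
  have ind3: "P.indep_vars (\<lambda>_. borel) (\<lambda>j \<omega>. (\<lambda>f. \<Sum>k\<in>Bl j. f k) (restrict (\<lambda>k. \<omega> k) (Bl j))) J"
    by (rule P.indep_vars_compose2[OF ind2]) auto
  have eq: "(\<lambda>f. \<Sum>k\<in>Bl j. f k) (restrict (\<lambda>k. \<omega> k) (Bl j)) = (\<Sum>k\<in>Bl j. \<omega> k)" for j \<omega>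
    by (auto intro!: sum.cong)
  have ind4: "P.indep_vars (\<lambda>_. borel) (\<lambda>j \<omega>. \<Sum>k\<in>Bl j. \<omega> k) J"
    using ind3 unfolding eq .
  have sG: "sets (G k) = sets borel" for k using G[of k] by (simp add: real_distribution_def real_distribution_axioms_def)
  have rv: "(\<lambda>\<omega>. \<Sum>k\<in>Bl j. \<omega> k) \<in> PiM I G \<rightarrow>\<^sub>M borel" if "j \<in> J" for j
  proof -
    have "(\<lambda>\<omega>. \<omega> k) \<in> PiM I G \<rightarrow>\<^sub>M borel" if "k \<in> Bl j" for k
      using measurable_component_singleton[of k I G] BlI[OF \<open>j \<in> J\<close>] that
        measurable_cong_sets[OF refl sG[of k], of "PiM I G"] by auto
    thus ?thesis by (intro borel_measurable_sum) auto
  qed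
  show ?thesis using ind4 by (subst (asm) P.indep_vars_iff_distr_eq_PiM'[OF J rv]) auto
qed

lemma distr_sum2:
  fixes G :: "'k \<Rightarrow> real measure"
  assumes I: "finite I" and G: "\<And>k. real_distribution (G k)"
    and k: "k1 \<in> I" "k2 \<in> I" "k1 \<noteq> k2"
  shows "distr (PiM I G) borel (\<lambda>\<omega>. \<omega> k1 + \<omega> k2) = (G k1 \<star> G k2)"
proof -
  interpret P: prob_space "PiM I G" by (rule prob_space_PiM) (use G in \<open>simp add: real_distribution_def\<close>)
  have I0: "I \<noteq> {}" using k by auto
  have ind: "P.indep_vars (\<lambda>_. borel) (\<lambda>k \<omega>. \<omega> k) I" by (rule PiM_coord_indep[OF I I0 G])
  have i2: "P.indep_var (PiM {k1} (\<lambda>_. borel)) (\<lambda>\<omega>. restrict (\<lambda>k. \<omega> k) {k1})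
                         (PiM {k2} (\<lambda>_. borel)) (\<lambda>\<omega>. restrict (\<lambda>k. \<omega> k) {k2})"
    by (rule P.indep_var_restrict[OF ind]) (use k in auto)
  have i3: "P.indep_var borel ((\<lambda>f. f k1) \<circ> (\<lambda>\<omega>. restrict (\<lambda>k. \<omega> k) {k1}))
                        borel ((\<lambda>f. f k2) \<circ> (\<lambda>\<omega>. restrict (\<lambda>k. \<omega> k) {k2}))"
    by (rule P.indep_var_compose[OF i2]) auto
  have e1: "((\<lambda>f. f k1) \<circ> (\<lambda>\<omega>. restrict (\<lambda>k. \<omega> k) {k1})) = (\<lambda>\<omega>. \<omega> k1)" by auto
  have e2: "((\<lambda>f. f k2) \<circ> (\<lambda>\<omega>. restrict (\<lambda>k. \<omega> k) {k2})) = (\<lambda>\<omega>. \<omega> k2)" by auto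
  have i4: "P.indep_var borel (\<lambda>\<omega>. \<omega> k1) borel (\<lambda>\<omega>. \<omega> k2)" using i3 unfolding e1 e2 .
  have sG: "sets (G k) = sets borel" for k using G[of k] by (simp add: real_distribution_def real_distribution_axioms_def)
  have comp: "distr (PiM I G) borel (\<lambda>\<omega>. \<omega> k) = G k" if "k \<in> I" for k
  proof -
    have "distr (PiM I G) borel (\<lambda>\<omega>. \<omega> k) = distr (PiM I G) (G k) (\<lambda>\<omega>. \<omega> k)"
      by (rule distr_cong) (auto simp: sG)
    also have "\<dots> = G k" by (rule distr_PiM_component) (use G that in \<open>auto simp: real_distribution_def\<close>)
    finally show ?thesis .
  qed
  have j: "G k1 \<Otimes>\<^sub>M G k2 = distr (PiM I G) (borel \<Otimes>\<^sub>M borel) (\<lambda>\<omega>. (\<omega> k1, \<omega> k2))"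
    using i4 unfolding P.indep_var_distribution_eq by (simp add: comp k)
  have rv: "(\<lambda>\<omega>. (\<omega> k1, \<omega> k2)) \<in> PiM I G \<rightarrow>\<^sub>M (borel \<Otimes>\<^sub>M borel)"
    using i4 unfolding P.indep_var_distribution_eq by (auto intro: measurable_Pair)
  have "(G k1 \<star> G k2) = distr (G k1 \<Otimes>\<^sub>M G k2) borel (\<lambda>(x, y). x + y)"
    by (simp add: convolution_def)
  also have "\<dots> = distr (distr (PiM I G) (borel \<Otimes>\<^sub>M borel) (\<lambda>\<omega>. (\<omega> k1, \<omega> k2))) borel (\<lambda>(x, y). x + y)"
    unfolding j ..
  also have "\<dots> = distr (PiM I G) borel (\<lambda>\<omega>. \<omega> k1 + \<omega> k2)"
    by (subst distr_distr[OF _ rv]) (auto simp: comp_def)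
  finally show ?thesis ..
qed

definition nxt :: "real set \<Rightarrow> real \<Rightarrow> real" where
  "nxt S s = Min {r\<in>S. s < r}"

definition Gm :: "(real \<Rightarrow> real measure) \<Rightarrow> (real \<Rightarrow> real \<Rightarrow> real measure) \<Rightarrow> real set \<Rightarrow> real \<times> 'd \<Rightarrow> real measure" where
  "Gm D C S k = (if fst k \<in> S then (if fst k = Max S then D (fst k) else C (nxt S (fst k)) (fst k)) else return borel 0)"

definition Om :: "(real \<Rightarrow> real measure) \<Rightarrow> (real \<Rightarrow> real \<Rightarrow> real measure) \<Rightarrow> real set \<Rightarrow> (real \<times> 'd \<Rightarrow> real) measure" where
  "Om D C S = PiM (S \<times> UNIV) (Gm D C S)"

definition Zs :: "real set \<Rightarrow> (real \<times> 'd \<Rightarrow> real) \<Rightarrow> real \<Rightarrow> 'd \<Rightarrow> real" where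
  "Zs S \<omega> \<rho> = (\<lambda>i. \<Sum>s\<in>{s\<in>S. \<rho> \<le> s}. \<omega> (s,i))"

definition NZ :: "(real \<Rightarrow> real measure) \<Rightarrow> (real \<Rightarrow> real \<Rightarrow> real measure) \<Rightarrow> real set \<Rightarrow> (real \<Rightarrow> 'd::finite \<Rightarrow> real) measure" where
  "NZ D C S = distr (Om D C S) (PiM S (\<lambda>_. Rd)) (\<lambda>\<omega>. \<lambda>\<rho>\<in>S. Zs S \<omega> \<rho>)"

definition valid :: "real set \<Rightarrow> bool" where
  "valid S \<longleftrightarrow> finite S \<and> S \<noteq> {} \<and> S \<subseteq> {0<..}"

lemma meas_sum_coords:
  assumes "finite A" "A \<subseteq> I"
  shows "(\<lambda>\<omega>. \<Sum>k\<in>A. \<omega> k) \<in> PiM I (\<lambda>_. borel) \<rightarrow>\<^sub>M (borel :: real measure)"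
proof -
  have "(\<lambda>\<omega>. \<omega> k) \<in> PiM I (\<lambda>_. borel) \<rightarrow>\<^sub>M (borel :: real measure)" if "k \<in> A" for k
    using assms that by (intro measurable_component_singleton) auto
  thus ?thesis by (intro borel_measurable_sum) auto
qed

lemma meas_Zs:
  assumes "finite S"
  shows "(\<lambda>\<omega>. Zs S \<omega> \<rho>) \<in> PiM (S \<times> (UNIV::'d::finite set)) (\<lambda>_. borel) \<rightarrow>\<^sub>M Rd"
proof -
  have "(\<lambda>\<omega>. \<lambda>i\<in>UNIV. Zs S \<omega> \<rho> i) \<in> PiM (S \<times> (UNIV::'d set)) (\<lambda>_. borel) \<rightarrow>\<^sub>M Rd"
  proof (rule measurable_restrict)
    fix i :: 'd
    have "(\<lambda>\<omega>. \<Sum>k\<in>(\<lambda>s. (s,i)) ` {s\<in>S. \<rho> \<le> s}. \<omega> k) \<in> PiM (S \<times> (UNIV::'d set)) (\<lambda>_. borel) \<rightarrow>\<^sub>M (borel :: real measure)"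
      using assms by (intro meas_sum_coords) auto
    moreover have "(\<Sum>k\<in>(\<lambda>s. (s,i)) ` {s\<in>S. \<rho> \<le> s}. \<omega> k) = Zs S \<omega> \<rho> i" for \<omega> :: "real \<times> 'd \<Rightarrow> real"
      unfolding Zs_def by (subst sum.reindex) (auto simp: inj_on_def)
    ultimately show "(\<lambda>\<omega>. Zs S \<omega> \<rho> i) \<in> PiM (S \<times> (UNIV::'d set)) (\<lambda>_. borel) \<rightarrow>\<^sub>M borel" by simp
  qed
  thus ?thesis by (simp add: restrict_def)
qed

lemma meas_Zv:
  assumes "finite S"
  shows "(\<lambda>\<omega>. \<lambda>\<rho>\<in>S. Zs S \<omega> \<rho>) \<in> PiM (S \<times> (UNIV::'d::finite set)) (\<lambda>_. borel) \<rightarrow>\<^sub>M PiM S (\<lambda>_. Rd)"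
  using meas_Zs[OF assms] by (intro measurable_restrict) auto

locale chainsg =
  fixes D :: "real \<Rightarrow> real measure" and C :: "real \<Rightarrow> real \<Rightarrow> real measure"
  assumes Dd: "\<And>\<rho>. 0 < \<rho> \<Longrightarrow> real_distribution (D \<rho>)"
    and Crd: "\<And>a b. real_distribution (C b a)"
    and DC: "\<And>a b. 0 < a \<Longrightarrow> a < b \<Longrightarrow> (D b \<star> C b a) = D a"
    and CC: "\<And>a b c. 0 < a \<Longrightarrow> a < b \<Longrightarrow> b < c \<Longrightarrow> C c a = (C c b \<star> C b a)"
begin

lemma rd_ret0: "real_distribution (return borel (0::real))"
  unfolding real_distribution_def real_distribution_axioms_def
  by (auto intro!: prob_space_return)

lemma Grd: "valid S \<Longrightarrow> real_distribution (Gm D C S k)"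
proof -
  assume S: "valid S"
  show ?thesis
  proof (cases "fst k \<in> S")
    case True
    show ?thesis
    proof (cases "fst k = Max S")
      case True
      have "0 < fst k" using \<open>fst k \<in> S\<close> S by (auto simp: valid_def)
      thus ?thesis using True \<open>fst k \<in> S\<close> Dd by (simp add: Gm_def)
    qed (use True Crd in \<open>simp add: Gm_def\<close>)
  qed (simp add: Gm_def rd_ret0)
qed

lemma sets_Gm: "valid S \<Longrightarrow> sets (Gm D C S k) = sets borel"
  using Grd[of S k] by (simp add: real_distribution_def real_distribution_axioms_def)

lemma sets_Om: "valid S \<Longrightarrow> sets (Om D C S) = sets (PiM (S \<times> UNIV) (\<lambda>_. borel))"
  unfolding Om_def by (rule sets_PiM_cong) (auto simp: sets_Gm)

lemma prob_Om: assumes "valid S" shows "prob_space (Om D C S)"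
proof -
  have "prob_space (Gm D C S k)" for k using Grd[OF assms, of k] by (simp add: real_distribution_def)
  thus ?thesis unfolding Om_def by (intro prob_space_PiM)
qed

lemma marg1:
  assumes S: "valid S" and q: "q \<in> S" and S'ne: "S - {q} \<noteq> {}"
  shows "distr (Om D C S) (PiM (S - {q}) (\<lambda>_. Rd)) (\<lambda>\<omega>. \<lambda>\<rho>\<in>S - {q}. Zs S \<omega> \<rho>) =
         (NZ D C (S - {q}) :: (real \<Rightarrow> 'd::finite \<Rightarrow> real) measure)"
proof -
  define S' where "S' = S - {q}"
  have fin: "finite S" and pos: "S \<subseteq> {0<..}" and Sne: "S \<noteq> {}" using S by (auto simp: valid_def)
  have fin': "finite S'" using fin by (simp add: S'_def)
  have S'S: "S' \<subseteq> S" by (auto simp: S'_def)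
  have vS': "valid S'" using S'ne fin pos by (auto simp: valid_def S'_def)
  define isM where "isM = (q = Min S)"
  define p where "p = Max {s\<in>S. s < q}"
  have pp: "p \<in> S \<and> p < q \<and> (\<forall>s\<in>S. s < q \<longrightarrow> s \<le> p)" if nM: "\<not> isM"
  proof -
    have "Min S \<in> S" "Min S \<le> q" using fin Sne q by auto
    moreover have "Min S \<noteq> q" using nM by (auto simp: isM_def)
    ultimately have ne: "{s\<in>S. s < q} \<noteq> {}" by force
    have "p \<in> {s\<in>S. s < q}" unfolding p_def using ne fin by (intro Max_in) auto
    moreover have "\<forall>s\<in>S. s < q \<longrightarrow> s \<le> p" unfolding p_def using fin by (auto intro!: Max_ge)
    ultimately show ?thesis by auto
  qed
  have pS': "p \<in> S'" if "\<not> isM" using pp[OF that] by (auto simp: S'_def)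
  have MaxS: "Max S \<in> S" "\<And>s. s \<in> S \<Longrightarrow> s \<le> Max S" using fin Sne by auto
  have MinS: "\<And>s. s \<in> S \<Longrightarrow> Min S \<le> s" using fin by auto
  have f1: "Max S' = s" if "s \<in> S'" "s = Max S" for s
    using that fin' S'S MaxS by (intro Max_eqI) auto
  have f2: "s \<noteq> Max S' \<and> nxt S' s = nxt S s" if s: "s \<in> S'" "s \<noteq> Max S" "isM \<or> s \<noteq> p" for s
  proof
    have sS: "s \<in> S" "s \<noteq> q" using s by (auto simp: S'_def)
    have slt: "s < Max S" using MaxS(2)[OF sS(1)] s(2) by simp
    show "s \<noteq> Max S'"
    proof
      assume sM: "s = Max S'"
      have "Max S \<notin> S'"
      proof
        assume "Max S \<in> S'"
        hence "Max S \<le> Max S'" using fin' by auto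
        thus False using sM slt by simp
      qed
      hence qM: "q = Max S" using MaxS(1) by (auto simp: S'_def)
      have sq: "s < q" using slt qM by simp
      have all: "\<forall>t\<in>S. t < q \<longrightarrow> t \<le> s"
        using sM fin' by (auto simp: S'_def)
      show False
      proof (cases isM)
        case True
        thus False using MinS[OF sS(1)] sq by (simp add: isM_def)
      next
        case False
        have "p \<le> s" using all pp[OF False] by auto
        moreover have "s \<le> p" using pp[OF False] sS sq by auto
        ultimately show False using s(3) False by simp
      qed
    qed
    define A where "A = {r\<in>S. s < r}"
    have finA: "finite A" using fin by (simp add: A_def)
    have neA: "A \<noteq> {}" using MaxS(1) slt by (auto simp: A_def)
    have mA: "Min A \<in> A" using finA neA by simp
    have mAq: "Min A \<noteq> q"
    proof
      assume mq: "Min A = q"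
      have sq: "s < q" using mA mq by (simp add: A_def)
      have all: "\<forall>r\<in>S. s < r \<longrightarrow> q \<le> r" using mq finA by (auto simp: A_def)
      show False
      proof (cases isM)
        case True
        thus False using MinS[OF sS(1)] sq by (simp add: isM_def)
      next
        case False
        have "\<not> s < p" using all pp[OF False] by force
        moreover have "s \<le> p" using pp[OF False] sS sq by auto
        ultimately show False using s(3) False by simp
      qed
    qed
    have A'eq: "{r\<in>S'. s < r} = A - {q}" by (auto simp: A_def S'_def)
    have "Min {r\<in>S'. s < r} = Min A"
      unfolding A'eq using mA mAq finA by (intro Min_eqI) auto
    thus "nxt S' s = nxt S s" by (simp add: nxt_def A_def)
  qed
  define Bl :: "real \<times> 'd \<Rightarrow> (real \<times> 'd) set" where "Bl = (\<lambda>(s,i). if \<not> isM \<and> s = p then {(p,i),(q,i)} else {(s,i)})"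
  let ?I = "S \<times> (UNIV :: 'd set)" and ?J = "S' \<times> (UNIV :: 'd set)"
  define mg where "mg = (\<lambda>\<omega>::real \<times> 'd \<Rightarrow> real. \<lambda>j\<in>?J. \<Sum>k\<in>Bl j. \<omega> k)"
  have GS: "real_distribution (Gm D C S k)" for k by (rule Grd[OF S])
  have GSp: "prob_space (Gm D C S k)" for k using GS[of k] by (simp add: real_distribution_def)
  have pq: "p \<noteq> q" if "\<not> isM" using pp[OF that] by simp
  have mb: "distr (Om D C S) (PiM ?J (\<lambda>_. borel)) mg = PiM ?J (\<lambda>j. distr (Om D C S) borel (\<lambda>\<omega>. \<Sum>k\<in>Bl j. \<omega> k))"
    unfolding Om_def mg_def
  proof (rule merge_blocks[OF _ _ GS])
    show "finite ?I" "?I \<noteq> {}" "?J \<noteq> {}" using fin Sne S'ne by (auto simp: S'_def)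
    show "Bl j \<subseteq> ?I" if "j \<in> ?J" for j using that pp q by (auto simp: Bl_def S'_def split: prod.splits)
    show "disjoint_family_on Bl ?J"
      unfolding disjoint_family_on_def using pq by (auto simp: Bl_def S'_def split: prod.splits if_splits)
  qed
  have law: "distr (Om D C S) borel (\<lambda>\<omega>. \<Sum>k\<in>Bl j. \<omega> k) = Gm D C S' j" if j: "j \<in> ?J" for j
  proof -
    obtain s i where ji: "j = (s,i)" by (cases j)
    have sS': "s \<in> S'" using j ji by simp
    have sS: "s \<in> S" "s \<noteq> q" using sS' by (auto simp: S'_def)
    show ?thesis
    proof (cases "\<not> isM \<and> s = p")
      case True
      have nM: "\<not> isM" and sp: "s = p" using True by auto
      have p0: "0 < p" using pp[OF nM] pos by auto
      have hsum: "(\<Sum>k\<in>Bl j. \<omega> k) = \<omega> (p,i) + \<omega> (q,i)" for \<omega> :: "real \<times> 'd \<Rightarrow> real"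
        using pq[OF nM] by (simp add: Bl_def ji sp nM)
      hence "distr (Om D C S) borel (\<lambda>\<omega>. \<Sum>k\<in>Bl j. \<omega> k) = (Gm D C S (p,i) \<star> Gm D C S (q,i))"
      proof -
        have "distr (PiM ?I (Gm D C S)) borel (\<lambda>\<omega>. \<omega> (p,i) + \<omega> (q,i)) = (Gm D C S (p,i) \<star> Gm D C S (q,i))"
          by (rule distr_sum2) (use fin pp[OF nM] q pq[OF nM] GS in auto)
        thus ?thesis unfolding Om_def hsum .
      qed
      also have "Gm D C S (p,i) = C q p"
      proof -
        have "p \<noteq> Max S" using pp[OF nM] MaxS(2)[OF q] by simp
        moreover have "nxt S p = q" unfolding nxt_def using pp[OF nM] q fin
          by (intro Min_eqI) force+
        ultimately show ?thesis using pp[OF nM] by (simp add: Gm_def)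
      qed
      finally have L: "distr (Om D C S) borel (\<lambda>\<omega>. \<Sum>k\<in>Bl j. \<omega> k) = (C q p \<star> Gm D C S (q,i))" .
      show ?thesis
      proof (cases "q = Max S")
        case True
        have yp: "y \<le> p" if "y \<in> S'" for y
        proof -
          have "y \<in> S" "y \<noteq> q" using that by (auto simp: S'_def)
          moreover have "y \<le> q" using MaxS(2)[OF \<open>y \<in> S\<close>] True by simp
          ultimately show ?thesis using pp[OF nM] by auto
        qed
        have "Max S' = p" using pS'[OF nM] fin' yp by (intro Max_eqI) auto
        hence "Gm D C S' j = D p" using sS' by (simp add: Gm_def ji sp)
        moreover have "Gm D C S (q,i) = D q" using True q by (simp add: Gm_def)
        moreover have "(C q p \<star> D q) = (D q \<star> C q p)" by (rule conv_comm_rd) (use Crd Dd p0 pp[OF nM] in auto)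
        ultimately show ?thesis using L DC[OF p0] pp[OF nM] by simp
      next
        case False
        have qlt: "q < Max S" using MaxS(2)[OF q] False by simp
        define n where "n = nxt S q"
        have nin: "n \<in> {r\<in>S. q < r}" unfolding n_def nxt_def using fin MaxS(1) qlt by (intro Min_in) auto
        have MS': "Max S' = Max S" using fin' S'S MaxS False by (intro Max_eqI) (auto simp: S'_def)
        have "{r\<in>S'. p < r} = {r\<in>S. q < r}" using pp[OF nM] by (force simp: S'_def)
        hence "nxt S' p = n" by (simp add: nxt_def n_def)
        moreover have "p \<noteq> Max S'" using MS' pp[OF nM] qlt by simp
        ultimately have "Gm D C S' j = C n p" using sS' by (simp add: Gm_def ji sp)
        moreover have "Gm D C S (q,i) = C n q" using False q by (simp add: Gm_def n_def)
        moreover have "(C q p \<star> C n q) = (C n q \<star> C q p)" by (rule conv_comm_rd[OF Crd Crd])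
        moreover have "C n p = (C n q \<star> C q p)" using CC[OF p0] pp[OF nM] nin by simp
        ultimately show ?thesis using L by simp
      qed
    next
      case False
      have hs: "(\<Sum>k\<in>Bl j. \<omega> k) = \<omega> (s,i)" for \<omega> :: "real \<times> 'd \<Rightarrow> real"
        using False by (auto simp: Bl_def ji)
      have "distr (Om D C S) borel (\<lambda>\<omega>. \<Sum>k\<in>Bl j. \<omega> k) = distr (Om D C S) borel (\<lambda>\<omega>. \<omega> (s,i))" unfolding hs ..
      also have "\<dots> = distr (Om D C S) (Gm D C S (s,i)) (\<lambda>\<omega>. \<omega> (s,i))"
        by (rule distr_cong) (auto simp: sets_Gm[OF S])
      also have "\<dots> = Gm D C S (s,i)" unfolding Om_def
        by (rule distr_PiM_component) (use GSp sS in auto)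
      also have "\<dots> = Gm D C S' (s,i)"
      proof (cases "s = Max S")
        case True
        thus ?thesis using f1[OF sS'] sS' sS by (simp add: Gm_def)
      next
        case nm: False
        have "isM \<or> s \<noteq> p" using False by auto
        from f2[OF sS' nm this] show ?thesis using nm sS sS' by (simp add: Gm_def)
      qed
      finally show ?thesis by (simp add: ji)
    qed
  qed
  have OmS': "distr (Om D C S) (PiM ?J (\<lambda>_. borel)) mg = Om D C S'"
  proof -
    have "distr (Om D C S) (PiM ?J (\<lambda>_. borel)) mg = PiM ?J (\<lambda>j. distr (Om D C S) borel (\<lambda>\<omega>. \<Sum>k\<in>Bl j. \<omega> k))"
      by (rule mb)
    also have "\<dots> = PiM ?J (Gm D C S')" by (rule PiM_cong) (auto simp: law)
    also have "\<dots> = Om D C S'" by (simp add: Om_def)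
    finally show ?thesis .
  qed
  have Zeq: "Zs S \<omega> \<rho> = Zs S' (mg \<omega>) \<rho>" if \<rho>: "\<rho> \<in> S'" for \<omega> \<rho>
  proof
    fix i :: 'd
    have \<rho>S: "\<rho> \<in> S" "\<rho> \<noteq> q" using \<rho> by (auto simp: S'_def)
    have key: "\<rho> \<le> q \<longleftrightarrow> (\<not> isM \<and> \<rho> \<le> p)"
    proof
      assume "\<rho> \<le> q"
      hence rq: "\<rho> < q" using \<rho>S by simp
      have "\<not> isM" using MinS[OF \<rho>S(1)] rq by (auto simp: isM_def)
      thus "\<not> isM \<and> \<rho> \<le> p" using pp rq \<rho>S by auto
    next
      assume "\<not> isM \<and> \<rho> \<le> p" thus "\<rho> \<le> q" using pp by force
    qed
    have e1: "(\<Sum>s\<in>{s\<in>S. \<rho> \<le> s}. \<omega> (s,i)) = (\<Sum>s\<in>{s\<in>S'. \<rho> \<le> s}. \<omega> (s,i)) + (if \<rho> \<le> q then \<omega> (q,i) else 0)"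
    proof (cases "\<rho> \<le> q")
      case True
      have "{s\<in>S. \<rho> \<le> s} = insert q {s\<in>S'. \<rho> \<le> s}" using True q by (auto simp: S'_def)
      moreover have "q \<notin> {s\<in>S'. \<rho> \<le> s}" by (simp add: S'_def)
      ultimately show ?thesis using True fin' by simp
    next
      case False
      have "{s\<in>S. \<rho> \<le> s} = {s\<in>S'. \<rho> \<le> s}" using False by (auto simp: S'_def)
      thus ?thesis using False by simp
    qed
    have e2: "(\<Sum>s\<in>{s\<in>S'. \<rho> \<le> s}. mg \<omega> (s,i)) =
              (\<Sum>s\<in>{s\<in>S'. \<rho> \<le> s}. \<omega> (s,i) + (if \<not> isM \<and> s = p then \<omega> (q,i) else 0))"
    proof (rule sum.cong[OF refl])
      fix s assume "s \<in> {s\<in>S'. \<rho> \<le> s}"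
      hence sJ: "(s,i) \<in> ?J" by simp
      show "mg \<omega> (s,i) = \<omega> (s,i) + (if \<not> isM \<and> s = p then \<omega> (q,i) else 0)"
        using sJ pq by (auto simp: mg_def Bl_def)
    qed
    have e3: "(\<Sum>s\<in>{s\<in>S'. \<rho> \<le> s}. (if \<not> isM \<and> s = p then \<omega> (q,i) else 0)) = (if \<not> isM \<and> \<rho> \<le> p then \<omega> (q,i) else 0)"
    proof (cases isM)
      case False
      have "(\<Sum>s\<in>{s\<in>S'. \<rho> \<le> s}. (if \<not> isM \<and> s = p then \<omega> (q,i) else 0)) =
            (\<Sum>s\<in>{s\<in>S'. \<rho> \<le> s}. (if s = p then \<omega> (q,i) else 0))" using False by simp
      also have "\<dots> = (if p \<in> {s\<in>S'. \<rho> \<le> s} then \<omega> (q,i) else 0)"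
        by (rule sum.delta[OF finite_subset[OF _ fin']]) auto
      finally show ?thesis using False pS' by auto
    qed simp
    show "Zs S \<omega> \<rho> i = Zs S' (mg \<omega>) \<rho> i"
      unfolding Zs_def using e1 e2 e3 key by (simp add: sum.distrib)
  qed
  have mgm: "mg \<in> Om D C S \<rightarrow>\<^sub>M PiM ?J (\<lambda>_. borel)"
  proof -
    have "mg \<in> PiM ?I (\<lambda>_. borel) \<rightarrow>\<^sub>M PiM ?J (\<lambda>_. borel)"
      unfolding mg_def
    proof (rule measurable_restrict)
      fix j assume "j \<in> ?J"
      hence "Bl j \<subseteq> ?I" using pp q by (auto simp: Bl_def S'_def split: prod.splits)
      thus "(\<lambda>\<omega>::real \<times> 'd \<Rightarrow> real. \<Sum>k\<in>Bl j. \<omega> k) \<in> PiM ?I (\<lambda>_. borel) \<rightarrow>\<^sub>M borel"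
      proof -
        have "finite (Bl j)" by (auto simp: Bl_def split: prod.splits)
        from meas_sum_coords[OF this \<open>Bl j \<subseteq> ?I\<close>] show ?thesis .
      qed
    qed
    thus ?thesis by (subst measurable_cong_sets[OF sets_Om[OF S] refl])
  qed
  have Zvm: "(\<lambda>\<omega>. \<lambda>\<rho>\<in>S'. Zs S' \<omega> \<rho>) \<in> PiM ?J (\<lambda>_. borel) \<rightarrow>\<^sub>M PiM S' (\<lambda>_. Rd)"
    by (rule meas_Zv[OF fin'])
  have "distr (Om D C S) (PiM S' (\<lambda>_. Rd)) (\<lambda>\<omega>. \<lambda>\<rho>\<in>S'. Zs S \<omega> \<rho>) =
        distr (Om D C S) (PiM S' (\<lambda>_. Rd)) (\<lambda>\<omega>. (\<lambda>\<omega>'. \<lambda>\<rho>\<in>S'. Zs S' \<omega>' \<rho>) (mg \<omega>))"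
    by (rule distr_cong) (auto simp: Zeq)
  also have "\<dots> = distr (distr (Om D C S) (PiM ?J (\<lambda>_. borel)) mg) (PiM S' (\<lambda>_. Rd)) (\<lambda>\<omega>'. \<lambda>\<rho>\<in>S'. Zs S' \<omega>' \<rho>)"
    by (rule distr_distr[symmetric, OF Zvm mgm, unfolded comp_def])
  also have "\<dots> = NZ D C S'" unfolding OmS' NZ_def ..
  finally show ?thesis unfolding S'_def .
qed

end

context chainsg begin

lemma meas_Zv_Om: "valid S \<Longrightarrow> (\<lambda>\<omega>. \<lambda>\<rho>\<in>S. Zs S \<omega> \<rho>) \<in> Om D C S \<rightarrow>\<^sub>M PiM S (\<lambda>_. (Rd :: ('d::finite \<Rightarrow> real) measure))"
  by (subst measurable_cong_sets[OF sets_Om refl]) (auto intro: meas_Zv simp: valid_def)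

lemma sets_NZ: "sets (NZ D C S :: (real \<Rightarrow> 'd::finite \<Rightarrow> real) measure) = sets (PiM S (\<lambda>_. Rd))"
  by (simp add: NZ_def)

lemma space_NZ: "space (NZ D C S :: (real \<Rightarrow> 'd::finite \<Rightarrow> real) measure) = space (PiM S (\<lambda>_. Rd))"
  by (rule sets_eq_imp_space_eq[OF sets_NZ])

lemma prob_NZ: "valid S \<Longrightarrow> prob_space (NZ D C S :: (real \<Rightarrow> 'd::finite \<Rightarrow> real) measure)"
  unfolding NZ_def by (intro prob_space.prob_space_distr prob_Om meas_Zv_Om)

lemma margNZ1:
  assumes S: "valid S" and q: "q \<in> S" and S'ne: "S - {q} \<noteq> {}"
  shows "distr (NZ D C S :: (real \<Rightarrow> 'd::finite \<Rightarrow> real) measure) (PiM (S - {q}) (\<lambda>_. Rd)) (\<lambda>z. restrict z (S - {q})) = NZ D C (S - {q})"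
proof -
  have r: "(\<lambda>z. restrict z (S - {q})) \<in> PiM S (\<lambda>_. Rd) \<rightarrow>\<^sub>M PiM (S - {q}) (\<lambda>_. (Rd :: ('d \<Rightarrow> real) measure))"
    by (rule measurable_restrict_subset) auto
  have "distr (NZ D C S :: (real \<Rightarrow> 'd \<Rightarrow> real) measure) (PiM (S - {q}) (\<lambda>_. Rd)) (\<lambda>z. restrict z (S - {q})) =
        distr (Om D C S) (PiM (S - {q}) (\<lambda>_. Rd)) ((\<lambda>z. restrict z (S - {q})) \<circ> (\<lambda>\<omega>. \<lambda>\<rho>\<in>S. Zs S \<omega> \<rho>))"
    unfolding NZ_def by (rule distr_distr[OF r meas_Zv_Om[OF S]])
  also have "\<dots> = distr (Om D C S) (PiM (S - {q}) (\<lambda>_. Rd)) (\<lambda>\<omega>. \<lambda>\<rho>\<in>S - {q}. Zs S \<omega> \<rho>)"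
    by (rule distr_cong) (auto simp: restrict_def fun_eq_iff)
  also have "\<dots> = NZ D C (S - {q})" by (rule marg1[OF S q S'ne])
  finally show ?thesis .
qed

lemma margNZ:
  assumes S: "valid S" and sub: "S'' \<subseteq> S" and ne: "S'' \<noteq> {}"
  shows "distr (NZ D C S :: (real \<Rightarrow> 'd::finite \<Rightarrow> real) measure) (PiM S'' (\<lambda>_. Rd)) (\<lambda>z. restrict z S'') = NZ D C S''"
  using S sub
proof (induction "card (S - S'')" arbitrary: S rule: less_induct)
  case less
  have finS: "finite S" using less.prems by (simp add: valid_def)
  show ?case
  proof (cases "S = S''")
    case True
    have "distr (NZ D C S :: (real \<Rightarrow> 'd \<Rightarrow> real) measure) (PiM S'' (\<lambda>_. Rd)) (\<lambda>z. restrict z S'') = distr (NZ D C S) (NZ D C S) (\<lambda>z. z)"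
      by (rule distr_cong) (auto simp: sets_NZ True space_NZ space_PiM PiE_def extensional_restrict)
    also have "\<dots> = NZ D C S" by (rule distr_id2) simp
    finally show ?thesis using True by simp
  next
    case False
    then obtain q where q: "q \<in> S" "q \<notin> S''" using less.prems by auto
    define S' where "S' = S - {q}"
    have S'ne: "S' \<noteq> {}" using ne less.prems q by (auto simp: S'_def)
    have vS': "valid S'" using less.prems S'ne by (auto simp: valid_def S'_def)
    have sub': "S'' \<subseteq> S'" using less.prems q by (auto simp: S'_def)
    have card: "card (S' - S'') < card (S - S'')"
    proof -
      have "S' - S'' = (S - S'') - {q}" by (auto simp: S'_def)
      thus ?thesis using q finS by (metis DiffI card_Diff1_less finite_Diff)
    qed
    have IH: "distr (NZ D C S') (PiM S'' (\<lambda>_. Rd)) (\<lambda>z. restrict z S'') = (NZ D C S'' :: (real \<Rightarrow> 'd \<Rightarrow> real) measure)"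
      by (rule less.hyps[OF card vS' sub'])
    have r1: "(\<lambda>z. restrict z S') \<in> PiM S (\<lambda>_. Rd) \<rightarrow>\<^sub>M PiM S' (\<lambda>_. (Rd :: ('d \<Rightarrow> real) measure))"
      by (rule measurable_restrict_subset) (auto simp: S'_def)
    have r2: "(\<lambda>z. restrict z S'') \<in> PiM S' (\<lambda>_. Rd) \<rightarrow>\<^sub>M PiM S'' (\<lambda>_. (Rd :: ('d \<Rightarrow> real) measure))"
      by (rule measurable_restrict_subset[OF sub'])
    have "distr (NZ D C S :: (real \<Rightarrow> 'd \<Rightarrow> real) measure) (PiM S'' (\<lambda>_. Rd)) (\<lambda>z. restrict z S'') =
          distr (NZ D C S) (PiM S'' (\<lambda>_. Rd)) ((\<lambda>z. restrict z S'') \<circ> (\<lambda>z. restrict z S'))"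
      by (rule distr_cong) (use sub' in \<open>auto simp: restrict_def fun_eq_iff\<close>)
    also have "\<dots> = distr (distr (NZ D C S) (PiM S' (\<lambda>_. Rd)) (\<lambda>z. restrict z S')) (PiM S'' (\<lambda>_. Rd)) (\<lambda>z. restrict z S'')"
      by (rule distr_distr[symmetric, OF r2]) (use r1 in \<open>simp add: measurable_cong_sets[OF sets_NZ refl]\<close>)
    also have "distr (NZ D C S) (PiM S' (\<lambda>_. Rd)) (\<lambda>z. restrict z S') = NZ D C S'"
      unfolding S'_def by (rule margNZ1[OF less.prems(1) q(1) S'ne[unfolded S'_def]])
    finally show ?thesis by (simp only: IH)
  qed
qed

lemma single_law:
  assumes r: "0 < \<rho>"
  shows "distr (NZ D C {\<rho>} :: (real \<Rightarrow> 'd::finite \<Rightarrow> real) measure) Rd (\<lambda>z. z \<rho>) = PiM UNIV (\<lambda>_. D \<rho>)"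
proof -
  have v: "valid {\<rho>}" using r by (simp add: valid_def)
  have m1: "(\<lambda>z. z \<rho>) \<in> PiM {\<rho>} (\<lambda>_. Rd) \<rightarrow>\<^sub>M (Rd :: ('d \<Rightarrow> real) measure)" by simp
  have "distr (NZ D C {\<rho>} :: (real \<Rightarrow> 'd \<Rightarrow> real) measure) Rd (\<lambda>z. z \<rho>) = distr (Om D C {\<rho>}) Rd ((\<lambda>z. z \<rho>) \<circ> (\<lambda>\<omega>. \<lambda>\<rho>'\<in>{\<rho>}. Zs {\<rho>} \<omega> \<rho>'))"
    unfolding NZ_def by (rule distr_distr[OF m1 meas_Zv_Om[OF v]])
  also have "\<dots> = distr (Om D C {\<rho>}) (PiM UNIV (\<lambda>i. Gm D C {\<rho>} ((\<lambda>i. (\<rho>, i)) i))) (\<lambda>\<omega>. \<lambda>n\<in>UNIV. \<omega> ((\<lambda>i. (\<rho>, i)) n))"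
  proof (rule distr_cong)
    have sing: "{s. s = \<rho> \<and> \<rho> \<le> s} = {\<rho>}" by auto
    show "((\<lambda>z. z \<rho>) \<circ> (\<lambda>\<omega>. \<lambda>\<rho>'\<in>{\<rho>}. Zs {\<rho>} \<omega> \<rho>')) \<omega> = (\<lambda>\<omega>. \<lambda>n\<in>UNIV. \<omega> ((\<lambda>i. (\<rho>, i)) n)) \<omega>" for \<omega> :: "real \<times> 'd \<Rightarrow> real"
      by (simp add: Zs_def fun_eq_iff sing)
  qed (auto simp: sets_Gm[OF v] intro!: sets_PiM_cong)
  also have "\<dots> = PiM UNIV (\<lambda>i. Gm D C {\<rho>} ((\<lambda>i. (\<rho>, i)) i))"
  proof -
    have Gp: "prob_space (Gm D C {\<rho>} k)" for k using Grd[OF v, of k] by (simp add: real_distribution_def)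
    show ?thesis unfolding Om_def by (rule distr_PiM_reindex) (use Gp in \<open>auto simp: inj_on_def\<close>)
  qed
  also have "\<dots> = PiM UNIV (\<lambda>_. D \<rho>)" by (rule PiM_cong) (auto simp: Gm_def)
  finally show ?thesis .
qed

lemma point_law:
  assumes S: "valid S" and r: "\<rho> \<in> S"
  shows "distr (NZ D C S :: (real \<Rightarrow> 'd::finite \<Rightarrow> real) measure) Rd (\<lambda>z. z \<rho>) = PiM UNIV (\<lambda>_. D \<rho>)"
proof -
  have r0: "0 < \<rho>" using S r by (auto simp: valid_def)
  have m1: "(\<lambda>z. z \<rho>) \<in> PiM {\<rho>} (\<lambda>_. Rd) \<rightarrow>\<^sub>M (Rd :: ('d \<Rightarrow> real) measure)" by simp
  have m2: "(\<lambda>z. restrict z {\<rho>}) \<in> NZ D C S \<rightarrow>\<^sub>M PiM {\<rho>} (\<lambda>_. (Rd :: ('d \<Rightarrow> real) measure))"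
    by (subst measurable_cong_sets[OF sets_NZ refl]) (rule measurable_restrict_subset, use r in auto)
  have mz: "distr (NZ D C S :: (real \<Rightarrow> 'd \<Rightarrow> real) measure) (PiM {\<rho>} (\<lambda>_. Rd)) (\<lambda>z. restrict z {\<rho>}) = NZ D C {\<rho>}"
    by (rule margNZ[OF S]) (use r in auto)
  have "distr (NZ D C S :: (real \<Rightarrow> 'd \<Rightarrow> real) measure) Rd (\<lambda>z. z \<rho>) = distr (NZ D C S) Rd ((\<lambda>z. z \<rho>) \<circ> (\<lambda>z. restrict z {\<rho>}))"
    by (rule distr_cong) auto
  also have "\<dots> = distr (distr (NZ D C S) (PiM {\<rho>} (\<lambda>_. Rd)) (\<lambda>z. restrict z {\<rho>})) Rd (\<lambda>z. z \<rho>)"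
    by (rule distr_distr[symmetric, OF m1 m2])
  also have "\<dots> = distr (NZ D C {\<rho>}) Rd (\<lambda>z. z \<rho>)" by (simp only: mz)
  also have "\<dots> = PiM UNIV (\<lambda>_. D \<rho>)" by (rule single_law[OF r0])
  finally show ?thesis .
qed

end

lemma distr_pair_bind:
  assumes A: "prob_space A" and B: "prob_space B" and h: "h \<in> A \<rightarrow>\<^sub>M Y'"
    and F: "(\<lambda>p. F (fst p) (snd p)) \<in> (Y' \<Otimes>\<^sub>M B) \<rightarrow>\<^sub>M N"
  shows "distr (A \<Otimes>\<^sub>M B) N (\<lambda>p. F (h (fst p)) (snd p)) = distr A Y' h \<bind> (\<lambda>y. distr B N (F y))"
proof -
  interpret A: prob_space A by fact
  interpret B: prob_space B by fact
  interpret AB: pair_sigma_finite A B ..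
  have F': "case_prod F \<in> (Y' \<Otimes>\<^sub>M B) \<rightarrow>\<^sub>M N" using F by (simp add: case_prod_beta')
  have Bsp: "B \<in> space (subprob_algebra B)"
    by (simp add: space_subprob_algebra prob_space_imp_subprob_space B)
  have K: "(\<lambda>y. distr B N (F y)) \<in> Y' \<rightarrow>\<^sub>M subprob_algebra N"
    by (rule measurable_distr2[OF F' measurable_const[OF Bsp]])
  have G: "(\<lambda>p. F (h (fst p)) (snd p)) \<in> (A \<Otimes>\<^sub>M B) \<rightarrow>\<^sub>M N"
  proof -
    have "(\<lambda>p. (h (fst p), snd p)) \<in> (A \<Otimes>\<^sub>M B) \<rightarrow>\<^sub>M (Y' \<Otimes>\<^sub>M B)"
      using h by (intro measurable_Pair) (auto intro: measurable_compose[OF measurable_fst])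
    from measurable_compose[OF this F] show ?thesis by simp
  qed
  have Fy: "F y \<in> B \<rightarrow>\<^sub>M N" if "y \<in> space Y'" for y
    using measurable_Pair2[OF F' that] by simp
  have ne: "space (distr A Y' h) \<noteq> {}"
    using A.not_empty measurable_space[OF h] by auto
  show ?thesis
  proof (rule measure_eqI)
    show "sets (distr (A \<Otimes>\<^sub>M B) N (\<lambda>p. F (h (fst p)) (snd p))) = sets (distr A Y' h \<bind> (\<lambda>y. distr B N (F y)))"
      by (subst sets_bind[OF _ ne]) auto
  next
    fix X assume X: "X \<in> sets (distr (A \<Otimes>\<^sub>M B) N (\<lambda>p. F (h (fst p)) (snd p)))"
    hence XN: "X \<in> sets N" by simp
    have "emeasure (distr A Y' h \<bind> (\<lambda>y. distr B N (F y))) X = (\<integral>\<^sup>+y. emeasure (distr B N (F y)) X \<partial>distr A Y' h)"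
      by (rule emeasure_bind[OF ne _ XN]) (use K in simp)
    also have "\<dots> = (\<integral>\<^sup>+a. emeasure (distr B N (F (h a))) X \<partial>A)"
      by (rule nn_integral_distr[OF h]) (use K XN in simp)
    also have "\<dots> = (\<integral>\<^sup>+a. emeasure B (Pair a -` ((\<lambda>p. F (h (fst p)) (snd p)) -` X \<inter> space (A \<Otimes>\<^sub>M B))) \<partial>A)"
    proof (rule nn_integral_cong)
      fix a assume a: "a \<in> space A"
      have ha: "h a \<in> space Y'" using measurable_space[OF h a] .
      have "Pair a -` ((\<lambda>p. F (h (fst p)) (snd p)) -` X \<inter> space (A \<Otimes>\<^sub>M B)) = F (h a) -` X \<inter> space B"
        using a by (auto simp: space_pair_measure)
      thus "emeasure (distr B N (F (h a))) X = emeasure B (Pair a -` ((\<lambda>p. F (h (fst p)) (snd p)) -` X \<inter> space (A \<Otimes>\<^sub>M B)))"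
        using Fy[OF ha] XN by (simp add: emeasure_distr)
    qed
    also have "\<dots> = emeasure (A \<Otimes>\<^sub>M B) ((\<lambda>p. F (h (fst p)) (snd p)) -` X \<inter> space (A \<Otimes>\<^sub>M B))"
      by (rule B.emeasure_pair_measure_alt[symmetric]) (use G XN in simp)
    also have "\<dots> = emeasure (distr (A \<Otimes>\<^sub>M B) N (\<lambda>p. F (h (fst p)) (snd p))) X"
      by (rule emeasure_distr[symmetric, OF G XN])
    finally show "emeasure (distr (A \<Otimes>\<^sub>M B) N (\<lambda>p. F (h (fst p)) (snd p))) X = emeasure (distr A Y' h \<bind> (\<lambda>y. distr B N (F y))) X" ..
  qed
qed

lemma prob_PiM_empty_unique:
  assumes "prob_space M1" "prob_space M2" "sets M1 = sets (PiM {} N)" "sets M2 = sets (PiM {} N)"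
  shows "M1 = M2"
proof (rule measure_eqI)
  show "sets M1 = sets M2" using assms by simp
  fix A assume A: "A \<in> sets M1"
  interpret M1: prob_space M1 by fact
  interpret M2: prob_space M2 by fact
  have sp1: "space M1 = space (PiM {} N)" by (rule sets_eq_imp_space_eq) fact
  have sp2: "space M2 = space (PiM {} N)" by (rule sets_eq_imp_space_eq) fact
  have sp: "space (PiM {} N) = {\<lambda>k. undefined}" by (simp add: space_PiM)
  have "A \<subseteq> space M1" using A by (rule sets.sets_into_space)
  hence "A = {} \<or> A = space M1" using sp1 sp by auto
  thus "emeasure M1 A = emeasure M2 A"
  proof
    assume "A = {}" thus ?thesis by simp
  next
    assume "A = space M1"
    hence "A = space M2" using sp1 sp2 by simp
    thus ?thesis using \<open>A = space M1\<close> M1.emeasure_space_1 M2.emeasure_space_1 by simp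
  qed
qed

definition ImplF :: "(real \<Rightarrow> real measure) \<Rightarrow> (real \<Rightarrow> real \<Rightarrow> real measure) \<Rightarrow> 'y measure \<Rightarrow>
    (('d::finite \<Rightarrow> real) \<Rightarrow> 'y) \<Rightarrow> ('x \<Rightarrow> 'd \<Rightarrow> real) \<Rightarrow> 'x \<Rightarrow> real list \<Rightarrow> (real \<Rightarrow> 'y) measure" where
  "ImplF D C Y H f x qs = distr (NZ D C (set qs) :: (real \<Rightarrow> 'd \<Rightarrow> real) measure) (PiM (set qs) (\<lambda>_. Y)) (\<lambda>z. \<lambda>\<rho>\<in>set qs. H (\<lambda>i. f x i + z \<rho> i))"

locale implsg = chainsg D C for D C +
  fixes Y :: "'y measure" and H :: "('d::finite \<Rightarrow> real) \<Rightarrow> 'y" and f :: "'x \<Rightarrow> 'd \<Rightarrow> real"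
  assumes H_meas: "H \<in> Rd \<rightarrow>\<^sub>M Y"
    and H_bij: "bij_betw H UNIV (space Y)"
    and H_inv_meas: "the_inv_into UNIV H \<in> Y \<rightarrow>\<^sub>M Rd"
begin

lemma shift_meas: "(\<lambda>v. \<lambda>i. c i + v i) \<in> (Rd :: ('d \<Rightarrow> real) measure) \<rightarrow>\<^sub>M Rd"
proof -
  have "(\<lambda>v. \<lambda>i\<in>UNIV. c i + v i) \<in> (Rd :: ('d \<Rightarrow> real) measure) \<rightarrow>\<^sub>M Rd"
    by (rule measurable_restrict) auto
  thus ?thesis by (simp add: restrict_def)
qed

lemma hx_meas: "(\<lambda>v. H (\<lambda>i. f x i + v i)) \<in> Rd \<rightarrow>\<^sub>M Y"
  using measurable_compose[OF shift_meas H_meas] by simp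

lemma out_meas: "(\<lambda>z. \<lambda>\<rho>\<in>S. H (\<lambda>i. f x i + z \<rho> i)) \<in> PiM S (\<lambda>_. Rd) \<rightarrow>\<^sub>M PiM S (\<lambda>_. Y)"
proof (rule measurable_restrict)
  fix \<rho> assume r: "\<rho> \<in> S"
  have "(\<lambda>z. z \<rho>) \<in> PiM S (\<lambda>_. Rd) \<rightarrow>\<^sub>M (Rd :: ('d \<Rightarrow> real) measure)"
    using r by (rule measurable_component_singleton)
  from measurable_compose[OF this hx_meas] show "(\<lambda>z. H (\<lambda>i. f x i + z \<rho> i)) \<in> PiM S (\<lambda>_. Rd) \<rightarrow>\<^sub>M Y" .
qed

lemma prob_NZ0:
  assumes "finite S" "S \<subseteq> {0<..}"
  shows "prob_space (NZ D C S :: (real \<Rightarrow> 'd \<Rightarrow> real) measure)"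
proof (cases "S = {}")
  case False
  thus ?thesis using assms by (intro prob_NZ) (auto simp: valid_def)
next
  case True
  have P: "prob_space (Om D C {} :: (real \<times> 'd \<Rightarrow> real) measure)"
    unfolding Om_def by (rule prob_space_PiM) simp
  have "(\<lambda>\<omega>. \<lambda>\<rho>\<in>{}. Zs {} \<omega> \<rho>) \<in> (Om D C {} :: (real \<times> 'd \<Rightarrow> real) measure) \<rightarrow>\<^sub>M PiM {} (\<lambda>_. (Rd :: ('d \<Rightarrow> real) measure))"
    by (rule measurable_restrict) simp
  thus ?thesis unfolding True NZ_def by (rule prob_space.prob_space_distr[OF P])
qed

lemma impl_prob:
  assumes "finite (set qs)" "set qs \<subseteq> {0<..}"
  shows "prob_space (ImplF D C Y H f x qs) \<and> sets (ImplF D C Y H f x qs) = sets (PiM (set qs) (\<lambda>_. Y))"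
proof
  show "prob_space (ImplF D C Y H f x qs)"
    unfolding ImplF_def
    by (rule prob_space.prob_space_distr[OF prob_NZ0[OF assms]])
       (subst measurable_cong_sets[OF sets_NZ refl], rule out_meas)
qed (simp add: ImplF_def)

lemma impl_prefix:
  assumes v: "valid_queries (qs @ [q])"
  shows "distr (ImplF D C Y H f x (qs @ [q])) (PiM (set qs) (\<lambda>_. Y)) (\<lambda>\<omega>. restrict \<omega> (set qs)) = ImplF D C Y H f x qs"
proof -
  define S where "S = insert q (set qs)"
  have qn: "q \<notin> set qs" and pos: "S \<subseteq> {0<..}" using v by (auto simp: valid_queries_def S_def)
  have sq: "set (qs @ [q]) = S" by (simp add: S_def)
  have S': "S - {q} = set qs" using qn by (auto simp: S_def)
  show ?thesis
  proof (cases "qs = []")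
    case True
    show ?thesis
    proof (rule prob_PiM_empty_unique)
      show "prob_space (distr (ImplF D C Y H f x (qs @ [q])) (PiM (set qs) (\<lambda>_. Y)) (\<lambda>\<omega>. restrict \<omega> (set qs)))"
        by (rule prob_space.prob_space_distr) (use impl_prob[of "qs @ [q]" x] pos sq in \<open>auto simp: True\<close>)
      show "prob_space (ImplF D C Y H f x qs)" using impl_prob[of qs x] by (simp add: True)
      show "sets (ImplF D C Y H f x qs) = sets (PiM {} (\<lambda>_. Y))" by (simp add: ImplF_def True)
    qed (simp add: True)
  next
    case False
    have vS: "valid S" using pos by (simp add: valid_def S_def)
    have ne: "S - {q} \<noteq> {}" using False S' by simp
    have r: "(\<lambda>z. restrict z (set qs)) \<in> PiM S (\<lambda>_. Rd) \<rightarrow>\<^sub>M PiM (set qs) (\<lambda>_. (Rd :: ('d \<Rightarrow> real) measure))"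
      by (rule measurable_restrict_subset) (auto simp: S_def)
    have "distr (ImplF D C Y H f x (qs @ [q])) (PiM (set qs) (\<lambda>_. Y)) (\<lambda>\<omega>. restrict \<omega> (set qs)) =
          distr (NZ D C S :: (real \<Rightarrow> 'd \<Rightarrow> real) measure) (PiM (set qs) (\<lambda>_. Y)) ((\<lambda>\<omega>. restrict \<omega> (set qs)) \<circ> (\<lambda>z. \<lambda>\<rho>\<in>S. H (\<lambda>i. f x i + z \<rho> i)))"
      unfolding ImplF_def sq
      by (rule distr_distr) (auto intro: measurable_restrict_subset simp: S_def measurable_cong_sets[OF sets_NZ refl] out_meas)
    also have "\<dots> = distr (NZ D C S) (PiM (set qs) (\<lambda>_. Y)) ((\<lambda>z. \<lambda>\<rho>\<in>set qs. H (\<lambda>i. f x i + z \<rho> i)) \<circ> (\<lambda>z. restrict z (set qs)))"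
      by (rule distr_cong) (auto simp: S_def restrict_def fun_eq_iff)
    also have "\<dots> = distr (distr (NZ D C S) (PiM (set qs) (\<lambda>_. Rd)) (\<lambda>z. restrict z (set qs))) (PiM (set qs) (\<lambda>_. Y)) (\<lambda>z. \<lambda>\<rho>\<in>set qs. H (\<lambda>i. f x i + z \<rho> i))"
      by (rule distr_distr[symmetric, OF out_meas]) (simp add: measurable_cong_sets[OF sets_NZ refl] r)
    also have "distr (NZ D C S) (PiM (set qs) (\<lambda>_. Rd)) (\<lambda>z. restrict z (set qs)) = NZ D C (set qs)"
      using margNZ1[OF vS _ ne] S' by (simp add: S_def)
    finally show ?thesis unfolding ImplF_def[of D C Y H f x qs] .
  qed
qed

lemma impl_point:
  assumes v: "valid_queries qs" and r: "\<rho> \<in> set qs"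
  shows "distr (ImplF D C Y H f x qs) Y (\<lambda>\<omega>. \<omega> \<rho>) = additive_noise_post Y H f (D \<rho>) x"
proof -
  define S where "S = set qs"
  have vS: "valid S" using v r by (auto simp: valid_def valid_queries_def S_def)
  have rS: "\<rho> \<in> S" using r by (simp add: S_def)
  have c: "(\<lambda>z. z \<rho>) \<in> PiM S (\<lambda>_. Rd) \<rightarrow>\<^sub>M (Rd :: ('d \<Rightarrow> real) measure)"
    using rS by (rule measurable_component_singleton)
  have "distr (ImplF D C Y H f x qs) Y (\<lambda>\<omega>. \<omega> \<rho>) =
        distr (NZ D C S :: (real \<Rightarrow> 'd \<Rightarrow> real) measure) Y ((\<lambda>\<omega>. \<omega> \<rho>) \<circ> (\<lambda>z. \<lambda>\<rho>\<in>S. H (\<lambda>i. f x i + z \<rho> i)))"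
    unfolding ImplF_def S_def[symmetric]
    by (rule distr_distr) (auto simp: measurable_cong_sets[OF sets_NZ refl] out_meas rS)
  also have "\<dots> = distr (NZ D C S) Y ((\<lambda>v. H (\<lambda>i. f x i + v i)) \<circ> (\<lambda>z. z \<rho>))"
    by (rule distr_cong) (auto simp: rS)
  also have "\<dots> = distr (distr (NZ D C S) Rd (\<lambda>z. z \<rho>)) Y (\<lambda>v. H (\<lambda>i. f x i + v i))"
    by (rule distr_distr[symmetric, OF hx_meas]) (simp add: measurable_cong_sets[OF sets_NZ refl] c)
  also have "distr (NZ D C S) Rd (\<lambda>z. z \<rho>) = PiM UNIV (\<lambda>_. D \<rho>)" by (rule point_law[OF vS rS])
  also have "distr (PiM UNIV (\<lambda>_. D \<rho>)) Y (\<lambda>v. H (\<lambda>i. f x i + v i)) = additive_noise_post Y H f (D \<rho>) x"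
    by (simp add: additive_noise_post_def)
  finally show ?thesis .
qed

end

lemma comp_i: "g \<in> M \<rightarrow>\<^sub>M (Rd :: ('d::finite \<Rightarrow> real) measure) \<Longrightarrow> (\<lambda>x. g x i) \<in> M \<rightarrow>\<^sub>M borel"
  using measurable_compose[of g M Rd "\<lambda>v. v i" borel] by simp

context implsg begin

lemma kernel:
  assumes vS: "valid S"
  shows "\<exists>K. K \<in> Y \<rightarrow>\<^sub>M prob_algebra (PiM S (\<lambda>_. Y)) \<and>
    (\<forall>x. distr (NZ D C S :: (real \<Rightarrow> 'd \<Rightarrow> real) measure) (PiM S (\<lambda>_. Y)) (\<lambda>z. \<lambda>\<rho>\<in>S. H (\<lambda>i. f x i + z \<rho> i)) =
         distr (PiM UNIV (\<lambda>_. D (Max S))) Y (\<lambda>v. H (\<lambda>i. f x i + v i)) \<bind> K)"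
proof -
  have fin: "finite S" and ne: "S \<noteq> {}" and pos: "S \<subseteq> {0<..}" using vS by (auto simp: valid_def)
  define m where "m = Max S"
  have mS: "m \<in> S" using fin ne by (simp add: m_def)
  have mge: "\<And>s. s \<in> S \<Longrightarrow> s \<le> m" using fin by (simp add: m_def)
  define S0 where "S0 = S - {m}"
  have fin0: "finite S0" using fin by (simp add: S0_def)
  define R where "R = S0 \<times> (UNIV :: 'd set)"
  define Am where "Am = {m} \<times> (UNIV :: 'd set)"
  define Hinv where "Hinv = the_inv_into UNIV H"
  define Fm where "Fm y \<omega>' = (\<lambda>\<rho>\<in>S. H (\<lambda>i. Hinv y i + Zs S0 \<omega>' \<rho> i))" for y \<omega>'
  define B where "B = PiM R (Gm D C S)"
  define K where "K y = distr B (PiM S (\<lambda>_. Y)) (Fm y)" for y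
  have GS: "real_distribution (Gm D C S k)" for k by (rule Grd[OF vS])
  have GSp: "prob_space (Gm D C S k)" for k using GS[of k] by (simp add: real_distribution_def)
  have Bp: "prob_space B" unfolding B_def by (rule prob_space_PiM) (rule GSp)
  have sB: "sets B = sets (PiM R (\<lambda>_. borel))" unfolding B_def
    by (rule sets_PiM_cong) (auto simp: sets_Gm[OF vS])
  have Hinvm: "Hinv \<in> Y \<rightarrow>\<^sub>M Rd" unfolding Hinv_def by (rule H_inv_meas)
  have Fmeas0: "(\<lambda>p. Fm (fst p) (snd p)) \<in> (Y \<Otimes>\<^sub>M PiM R (\<lambda>_. borel)) \<rightarrow>\<^sub>M PiM S (\<lambda>_. Y)"
    unfolding Fm_def
  proof (rule measurable_restrict)
    fix \<rho> assume "\<rho> \<in> S"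
    have g: "(\<lambda>p. \<lambda>i\<in>UNIV. Hinv (fst p) i + Zs S0 (snd p) \<rho> i) \<in> (Y \<Otimes>\<^sub>M PiM R (\<lambda>_. borel)) \<rightarrow>\<^sub>M (Rd :: ('d \<Rightarrow> real) measure)"
    proof (rule measurable_restrict)
      fix i :: 'd
      have a: "(\<lambda>p. Hinv (fst p) i) \<in> (Y \<Otimes>\<^sub>M PiM R (\<lambda>_. borel)) \<rightarrow>\<^sub>M borel"
        by (rule comp_i) (rule measurable_compose[OF measurable_fst Hinvm])
      have b: "(\<lambda>p. Zs S0 (snd p) \<rho> i) \<in> (Y \<Otimes>\<^sub>M PiM R (\<lambda>_. borel)) \<rightarrow>\<^sub>M borel"
        by (rule comp_i) (rule measurable_compose[OF measurable_snd], unfold R_def, rule meas_Zs[OF fin0])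
      show "(\<lambda>p. Hinv (fst p) i + Zs S0 (snd p) \<rho> i) \<in> (Y \<Otimes>\<^sub>M PiM R (\<lambda>_. borel)) \<rightarrow>\<^sub>M borel"
        using a b by (rule borel_measurable_add)
    qed
    have g': "(\<lambda>p. \<lambda>i. Hinv (fst p) i + Zs S0 (snd p) \<rho> i) \<in> (Y \<Otimes>\<^sub>M PiM R (\<lambda>_. borel)) \<rightarrow>\<^sub>M (Rd :: ('d \<Rightarrow> real) measure)"
      using g by (simp add: restrict_def)
    show "(\<lambda>p. H (\<lambda>i. Hinv (fst p) i + Zs S0 (snd p) \<rho> i)) \<in> (Y \<Otimes>\<^sub>M PiM R (\<lambda>_. borel)) \<rightarrow>\<^sub>M Y"
      using measurable_compose[OF g' H_meas] by simp
  qed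
  have Fmeas: "(\<lambda>p. Fm (fst p) (snd p)) \<in> (Y \<Otimes>\<^sub>M B) \<rightarrow>\<^sub>M PiM S (\<lambda>_. Y)"
    using Fmeas0 by (subst measurable_cong_sets[OF sets_pair_measure_cong[OF refl sB] refl])
  have Fy: "Fm y \<in> B \<rightarrow>\<^sub>M PiM S (\<lambda>_. Y)" if "y \<in> space Y" for y
    using measurable_Pair2[OF Fmeas that] by simp
  have Bsp: "B \<in> space (subprob_algebra B)"
    by (simp add: space_subprob_algebra prob_space_imp_subprob_space Bp)
  have Kmeas: "K \<in> Y \<rightarrow>\<^sub>M prob_algebra (PiM S (\<lambda>_. Y))"
  proof (rule measurable_prob_algebraI)
    show "prob_space (K y)" if "y \<in> space Y" for y
      unfolding K_def by (rule prob_space.prob_space_distr[OF Bp Fy[OF that]])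
    have "case_prod Fm \<in> (Y \<Otimes>\<^sub>M B) \<rightarrow>\<^sub>M PiM S (\<lambda>_. Y)" using Fmeas by (simp add: case_prod_beta')
    thus "K \<in> Y \<rightarrow>\<^sub>M subprob_algebra (PiM S (\<lambda>_. Y))"
      unfolding K_def by (rule measurable_distr2[OF _ measurable_const[OF Bsp]])
  qed
  interpret P: prob_space "Om D C S :: (real \<times> 'd \<Rightarrow> real) measure" by (rule prob_Om[OF vS])
  have I: "finite (S \<times> (UNIV :: 'd set))" "S \<times> (UNIV :: 'd set) \<noteq> {}" using fin ne by auto
  have ind: "P.indep_vars (\<lambda>_. borel) (\<lambda>k \<omega>. \<omega> k) (S \<times> (UNIV :: 'd set))"
    unfolding Om_def by (rule PiM_coord_indep[OF I GS])
  have i2: "P.indep_var (PiM Am (\<lambda>_. borel)) (\<lambda>\<omega>. restrict (\<lambda>k. \<omega> k) Am) (PiM R (\<lambda>_. borel)) (\<lambda>\<omega>. restrict (\<lambda>k. \<omega> k) R)"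
    by (rule P.indep_var_restrict[OF ind]) (use mS in \<open>auto simp: Am_def R_def S0_def\<close>)
  define Zm where "Zm = (\<lambda>g::real \<times> 'd \<Rightarrow> real. \<lambda>i. g (m, i))"
  define A where "A = PiM Am (Gm D C S)"
  have Ap: "prob_space A" unfolding A_def by (rule prob_space_PiM) (rule GSp)
  have sA: "sets A = sets (PiM Am (\<lambda>_. borel))" unfolding A_def
    by (rule sets_PiM_cong) (auto simp: sets_Gm[OF vS])
  have c1: "Zm \<in> PiM Am (\<lambda>_. borel) \<rightarrow>\<^sub>M (Rd :: ('d \<Rightarrow> real) measure)"
  proof -
    have "(\<lambda>g. \<lambda>i\<in>UNIV. g (m, i)) \<in> PiM Am (\<lambda>_. borel) \<rightarrow>\<^sub>M (Rd :: ('d \<Rightarrow> real) measure)"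
      by (rule measurable_restrict) (auto simp: Am_def)
    thus ?thesis by (simp add: restrict_def Zm_def)
  qed
  have c1A: "Zm \<in> A \<rightarrow>\<^sub>M (Rd :: ('d \<Rightarrow> real) measure)"
    using c1 by (subst measurable_cong_sets[OF sA refl])
  have lawZ: "distr A Rd Zm = PiM UNIV (\<lambda>_. D m)"
  proof -
    have "distr A Rd Zm = distr A (PiM UNIV (\<lambda>i. Gm D C S ((\<lambda>i. (m, i)) i))) (\<lambda>\<omega>. \<lambda>n\<in>UNIV. \<omega> ((\<lambda>i. (m, i)) n))"
      by (rule distr_cong) (auto simp: Zm_def sets_Gm[OF vS] intro!: sets_PiM_cong)
    also have "\<dots> = PiM UNIV (\<lambda>i. Gm D C S ((\<lambda>i. (m, i)) i))"
      unfolding A_def by (rule distr_PiM_reindex) (use GSp in \<open>auto simp: inj_on_def Am_def\<close>)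
    also have "\<dots> = PiM UNIV (\<lambda>_. D m)" by (rule PiM_cong) (use mS in \<open>auto simp: Gm_def m_def\<close>)
    finally show ?thesis .
  qed
  have pp: "product_prob_space (Gm D C S)" by (rule product_prob_spaceI) (rule GSp)
  have lawR: "distr (Om D C S) (PiM R (\<lambda>_. borel)) (\<lambda>\<omega>. restrict \<omega> R) = B"
  proof -
    have "distr (Om D C S) (PiM R (\<lambda>_. borel)) (\<lambda>\<omega>. restrict \<omega> R) = distr (Om D C S) B (\<lambda>\<omega>. restrict \<omega> R)"
      by (rule distr_cong) (auto simp: sB)
    also have "\<dots> = B" unfolding Om_def B_def
      by (rule product_prob_space.distr_PiM_restrict_finite[OF pp]) (auto simp: R_def S0_def fin)
    finally show ?thesis .
  qed
  have lawA: "distr (Om D C S) (PiM Am (\<lambda>_. borel)) (\<lambda>\<omega>. restrict \<omega> Am) = A"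
  proof -
    have "distr (Om D C S) (PiM Am (\<lambda>_. borel)) (\<lambda>\<omega>. restrict \<omega> Am) = distr (Om D C S) A (\<lambda>\<omega>. restrict \<omega> Am)"
      by (rule distr_cong) (auto simp: sA)
    also have "\<dots> = A" unfolding Om_def A_def
      by (rule product_prob_space.distr_PiM_restrict_finite[OF pp]) (use mS in \<open>auto simp: Am_def\<close>)
    finally show ?thesis .
  qed
  have J: "distr (Om D C S) (PiM Am (\<lambda>_. borel) \<Otimes>\<^sub>M PiM R (\<lambda>_. borel)) (\<lambda>\<omega>. (restrict \<omega> Am, restrict \<omega> R)) = A \<Otimes>\<^sub>M B"
    using i2 unfolding P.indep_var_distribution_eq by (simp add: lawA lawR)
  have pairm: "(\<lambda>\<omega>. (restrict \<omega> Am, restrict \<omega> R)) \<in> Om D C S \<rightarrow>\<^sub>M (PiM Am (\<lambda>_. borel) \<Otimes>\<^sub>M PiM R (\<lambda>_. borel))"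
    using i2 unfolding P.indep_var_distribution_eq by (auto intro: measurable_Pair)
  show ?thesis
  proof (intro exI[of _ K] conjI allI Kmeas)
    fix x
    define h where "h v = H (\<lambda>i. f x i + v i)" for v
    have hm: "h \<in> Rd \<rightarrow>\<^sub>M Y" unfolding h_def by (rule hx_meas)
    have hA: "(h \<circ> Zm) \<in> A \<rightarrow>\<^sub>M Y" by (rule measurable_comp[OF c1A hm])
    have lawh: "distr A Y (h \<circ> Zm) = distr (PiM UNIV (\<lambda>_. D m)) Y h"
    proof -
      have "distr A Y (h \<circ> Zm) = distr (distr A Rd Zm) Y h" by (rule distr_distr[symmetric, OF hm c1A])
      thus ?thesis unfolding lawZ .
    qed
    have injH: "inj_on H UNIV" using H_bij by (rule bij_betw_imp_inj_on)
    have pt: "(\<lambda>\<rho>\<in>S. H (\<lambda>i. f x i + Zs S \<omega> \<rho> i)) = Fm ((h \<circ> Zm) (restrict \<omega> Am)) (restrict \<omega> R)" for \<omega>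
    proof -
      have hinv: "Hinv ((h \<circ> Zm) (restrict \<omega> Am)) = (\<lambda>i. f x i + \<omega> (m, i))"
        unfolding Hinv_def h_def Zm_def comp_def by (subst the_inv_into_f_f[OF injH]) (auto simp: Am_def)
      have zs: "Zs S \<omega> \<rho> i = \<omega> (m, i) + Zs S0 (restrict \<omega> R) \<rho> i" if r: "\<rho> \<in> S" for \<rho> i
      proof -
        have "{s\<in>S. \<rho> \<le> s} = insert m {s\<in>S0. \<rho> \<le> s}" using mS mge r by (auto simp: S0_def)
        moreover have "m \<notin> {s\<in>S0. \<rho> \<le> s}" by (simp add: S0_def)
        ultimately have "Zs S \<omega> \<rho> i = \<omega> (m, i) + (\<Sum>s\<in>{s\<in>S0. \<rho> \<le> s}. \<omega> (s, i))"
          using fin0 by (simp add: Zs_def)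
        also have "(\<Sum>s\<in>{s\<in>S0. \<rho> \<le> s}. \<omega> (s, i)) = Zs S0 (restrict \<omega> R) \<rho> i"
          unfolding Zs_def by (auto simp: R_def intro!: sum.cong)
        finally show ?thesis .
      qed
      show ?thesis unfolding Fm_def hinv using zs by (auto simp: fun_eq_iff add.assoc)
    qed
    have Gm2: "(\<lambda>p. Fm ((h \<circ> Zm) (fst p)) (snd p)) \<in> (PiM Am (\<lambda>_. borel) \<Otimes>\<^sub>M PiM R (\<lambda>_. borel)) \<rightarrow>\<^sub>M PiM S (\<lambda>_. Y)"
    proof -
      have hA': "(h \<circ> Zm) \<in> PiM Am (\<lambda>_. borel) \<rightarrow>\<^sub>M Y" by (rule measurable_comp[OF c1 hm])
      have "(\<lambda>p. ((h \<circ> Zm) (fst p), snd p)) \<in> (PiM Am (\<lambda>_. borel) \<Otimes>\<^sub>M PiM R (\<lambda>_. borel)) \<rightarrow>\<^sub>M (Y \<Otimes>\<^sub>M PiM R (\<lambda>_. borel))"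
        by (rule measurable_Pair[OF measurable_compose[OF measurable_fst hA'] measurable_snd])
      from measurable_compose[OF this Fmeas0] show ?thesis by simp
    qed
    have "distr (NZ D C S :: (real \<Rightarrow> 'd \<Rightarrow> real) measure) (PiM S (\<lambda>_. Y)) (\<lambda>z. \<lambda>\<rho>\<in>S. H (\<lambda>i. f x i + z \<rho> i)) =
          distr (Om D C S) (PiM S (\<lambda>_. Y)) ((\<lambda>z. \<lambda>\<rho>\<in>S. H (\<lambda>i. f x i + z \<rho> i)) \<circ> (\<lambda>\<omega>. \<lambda>\<rho>\<in>S. Zs S \<omega> \<rho>))"
      unfolding NZ_def by (rule distr_distr[OF out_meas meas_Zv_Om[OF vS]])
    also have "\<dots> = distr (Om D C S) (PiM S (\<lambda>_. Y)) ((\<lambda>p. Fm ((h \<circ> Zm) (fst p)) (snd p)) \<circ> (\<lambda>\<omega>. (restrict \<omega> Am, restrict \<omega> R)))"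
    proof (rule distr_cong)
      fix \<omega> :: "real \<times> 'd \<Rightarrow> real"
      have "(\<lambda>\<rho>\<in>S. H (\<lambda>i. f x i + (\<lambda>\<rho>\<in>S. Zs S \<omega> \<rho>) \<rho> i)) = (\<lambda>\<rho>\<in>S. H (\<lambda>i. f x i + Zs S \<omega> \<rho> i))"
        by (rule restrict_ext) simp
      thus "((\<lambda>z. \<lambda>\<rho>\<in>S. H (\<lambda>i. f x i + z \<rho> i)) \<circ> (\<lambda>\<omega>. \<lambda>\<rho>\<in>S. Zs S \<omega> \<rho>)) \<omega> =
            ((\<lambda>p. Fm ((h \<circ> Zm) (fst p)) (snd p)) \<circ> (\<lambda>\<omega>. (restrict \<omega> Am, restrict \<omega> R))) \<omega>"
        using pt[of \<omega>] by simp
    qed simp_all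
    also have "\<dots> = distr (distr (Om D C S) (PiM Am (\<lambda>_. borel) \<Otimes>\<^sub>M PiM R (\<lambda>_. borel)) (\<lambda>\<omega>. (restrict \<omega> Am, restrict \<omega> R))) (PiM S (\<lambda>_. Y)) (\<lambda>p. Fm ((h \<circ> Zm) (fst p)) (snd p))"
      by (rule distr_distr[symmetric, OF Gm2 pairm])
    also have "\<dots> = distr (A \<Otimes>\<^sub>M B) (PiM S (\<lambda>_. Y)) (\<lambda>p. Fm ((h \<circ> Zm) (fst p)) (snd p))"
      unfolding J ..
    also have "\<dots> = distr A Y (h \<circ> Zm) \<bind> K"
      unfolding K_def by (rule distr_pair_bind[OF Ap Bp hA Fmeas])
    also have "\<dots> = distr (PiM UNIV (\<lambda>_. D m)) Y h \<bind> K" unfolding lawh ..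
    finally have fin1: "distr (NZ D C S :: (real \<Rightarrow> 'd \<Rightarrow> real) measure) (PiM S (\<lambda>_. Y)) (\<lambda>z. \<lambda>\<rho>\<in>S. H (\<lambda>i. f x i + z \<rho> i)) =
         distr (PiM UNIV (\<lambda>_. D m)) Y h \<bind> K" .
    have hh: "h = (\<lambda>v. H (\<lambda>i. f x i + v i))" by (rule ext) (simp add: h_def)
    show "distr (NZ D C S :: (real \<Rightarrow> 'd \<Rightarrow> real) measure) (PiM S (\<lambda>_. Y)) (\<lambda>z. \<lambda>\<rho>\<in>S. H (\<lambda>i. f x i + z \<rho> i)) =
         distr (PiM UNIV (\<lambda>_. D (Max S))) Y (\<lambda>v. H (\<lambda>i. f x i + v i)) \<bind> K"
      using fin1 unfolding hh m_def .
  qed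
qed

end

theorem theorem4p4:
  fixes Y :: "'y measure"
    and M :: "real \<Rightarrow> 'x \<Rightarrow> 'y measure"
    and D :: "real \<Rightarrow> real measure"
    and f :: "'x \<Rightarrow> 'd::finite \<Rightarrow> real"
    and H :: "('d \<Rightarrow> real) \<Rightarrow> 'y"
  assumes D_distr: "\<And>\<rho>. 0 < \<rho> \<Longrightarrow> real_distribution (D \<rho>)"
    and D_preorder: "convolution_preorder D"
    and H_meas: "H \<in> Rd \<rightarrow>\<^sub>M Y"
    and H_bij: "bij_betw H UNIV (space Y)"
    and H_inv_meas: "the_inv_into UNIV H \<in> Y \<rightarrow>\<^sub>M Rd"
    and M_decomp: "\<And>\<rho> x. 0 < \<rho> \<Longrightarrow> M \<rho> x = additive_noise_post Y H f (D \<rho>) x"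
  shows "lossless_multiple_release Y M"
proof -
  obtain C where CC: "(\<forall>a b. real_distribution (C b a)) \<and>
     (\<forall>a b. 0 < a \<longrightarrow> a < b \<longrightarrow> (D b \<star> C b a) = D a) \<and>
     (\<forall>a b c. 0 < a \<longrightarrow> a < b \<longrightarrow> b < c \<longrightarrow> C c a = (C c b \<star> C b a))"
    using sg_exists[OF D_distr D_preorder] by blast
  have C1': "\<And>a b. real_distribution (C b a)" using CC by blast
  have C2': "\<And>a b. 0 < a \<Longrightarrow> a < b \<Longrightarrow> (D b \<star> C b a) = D a" using CC by blast
  have C3': "\<And>a b c. 0 < a \<Longrightarrow> a < b \<Longrightarrow> b < c \<Longrightarrow> C c a = (C c b \<star> C b a)" using CC by blast
  have L: "implsg D C Y H"
    unfolding implsg_def chainsg_def implsg_axioms_def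
    by (intro conjI allI impI; (rule D_distr C1' C2' C3' H_meas H_bij H_inv_meas; assumption)?)
  interpret I: implsg D C Y H f by (rule L)
  show ?thesis
    unfolding lossless_multiple_release_def implements_lossless_def is_implementation_def
  proof (intro exI[of _ "ImplF D C Y H f"] conjI allI impI)
    fix x qs assume v: "valid_queries qs"
    have "prob_space (ImplF D C Y H f x qs) \<and> sets (ImplF D C Y H f x qs) = sets (PiM (set qs) (\<lambda>_. Y))"
      using v by (intro I.impl_prob) (auto simp: valid_queries_def)
    thus "prob_space (ImplF D C Y H f x qs)" by blast
  next
    fix x qs assume v: "valid_queries qs"
    have "prob_space (ImplF D C Y H f x qs) \<and> sets (ImplF D C Y H f x qs) = sets (PiM (set qs) (\<lambda>_. Y))"
      using v by (intro I.impl_prob) (auto simp: valid_queries_def)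
    thus "sets (ImplF D C Y H f x qs) = sets (PiM (set qs) (\<lambda>_. Y))" by blast
  next
    fix x qs q assume v: "valid_queries (qs @ [q])"
    show "distr (ImplF D C Y H f x (qs @ [q])) (PiM (set qs) (\<lambda>_. Y)) (\<lambda>\<omega>. restrict \<omega> (set qs)) = ImplF D C Y H f x qs"
      by (rule I.impl_prefix[OF v])
  next
    fix x qs \<rho> assume v: "valid_queries qs" and r: "\<rho> \<in> set qs"
    have "0 < \<rho>" using v r by (auto simp: valid_queries_def)
    thus "distr (ImplF D C Y H f x qs) Y (\<lambda>\<omega>. \<omega> \<rho>) = M \<rho> x"
      using I.impl_point[OF v r] M_decomp by simp
  next
    fix S :: "real set" assume fin: "finite S" and ne: "S \<noteq> {}" and pos: "\<forall>\<rho>\<in>S. 0 < \<rho>"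
    have vS: "valid S" using fin ne pos by (auto simp: valid_def)
    obtain K where Km: "K \<in> Y \<rightarrow>\<^sub>M prob_algebra (PiM S (\<lambda>_. Y))"
      and KK: "\<And>x. distr (NZ D C S :: (real \<Rightarrow> 'd \<Rightarrow> real) measure) (PiM S (\<lambda>_. Y)) (\<lambda>z. \<lambda>\<rho>\<in>S. H (\<lambda>i. f x i + z \<rho> i)) =
         distr (PiM UNIV (\<lambda>_. D (Max S))) Y (\<lambda>v. H (\<lambda>i. f x i + v i)) \<bind> K"
      using I.kernel[OF vS] by blast
    show "\<exists>K. K \<in> Y \<rightarrow>\<^sub>M prob_algebra (PiM S (\<lambda>_. Y)) \<and>
           (\<forall>x qs. distinct qs \<longrightarrow> set qs = S \<longrightarrow>
              ImplF D C Y H f x qs = distr (ImplF D C Y H f x qs) Y (\<lambda>\<omega>. \<omega> (Max S)) \<bind> K)"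
    proof (intro exI[of _ K] conjI allI impI Km)
      fix x qs assume d: "distinct qs" and sq: "set qs = S"
      have vq: "valid_queries qs" using d sq pos by (auto simp: valid_queries_def)
      have mS: "Max S \<in> set qs" using fin ne sq by simp
      have "distr (ImplF D C Y H f x qs) Y (\<lambda>\<omega>. \<omega> (Max S)) = additive_noise_post Y H f (D (Max S)) x"
        by (rule I.impl_point[OF vq mS])
      also have "\<dots> = distr (PiM UNIV (\<lambda>_. D (Max S))) Y (\<lambda>v. H (\<lambda>i. f x i + v i))"
        by (simp add: additive_noise_post_def)
      finally have e: "distr (ImplF D C Y H f x qs) Y (\<lambda>\<omega>. \<omega> (Max S)) = distr (PiM UNIV (\<lambda>_. D (Max S))) Y (\<lambda>v. H (\<lambda>i. f x i + v i))" .
      show "ImplF D C Y H f x qs = distr (ImplF D C Y H f x qs) Y (\<lambda>\<omega>. \<omega> (Max S)) \<bind> K"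
        unfolding e using KK[of x] by (simp add: ImplF_def sq)
    qed
  qed
qed

end
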